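(* Let $(\mathscr{A},\mathscr{E})$ and $(\mathscr{B},\mathscr{F})$ be exact categories (in the sense of Quillen) and let $L : \mathscr{A} \rightarrow \mathscr{B}$ be an exact functor. Suppose $\mathscr{F}' \subseteq \mathscr{F}$ is a subfamily of conflations such that $(\mathscr{B},\mathscr{F}')$ is again an exact category. Define $\mathscr{E}' = \{ s \in \mathscr{E} : Ls \in \mathscr{F}' \}$. Then $(\mathscr{A},\mathscr{E}')$ is an exact category.
   Context: An exact category $(\mathscr{A},\mathscr{E})$ is an additive category $\mathscr{A}$ together with a class $\mathscr{E}$ of kernel–cokernel pairs (short exact sequences, "conflations") $X \rightarrowtail Y \twoheadrightarrow Z$, closed under isomorphism, satisfying Quillen's axioms (equivalently Keller's minimal axioms: identity of $0$ is a deflation; composites of deflations are deflations; pullbacks of deflations along arbitrary morphisms exist and are deflations; dually pushouts of inflations exist and are inflations). An exact functor $L:(\mathscr{A},\mathscr{E})\to(\mathscr{B},\mathscr{F})$ is an additive functor sending sequences in $\mathscr{E}$ to sequences in $\mathscr{F}$. For $s\in\mathscr{E}$, $Ls$ denotes the image sequence. *)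

theory Defs
  imports Main
begin

text \<open>Additive categories encoded explicitly: objects of type 'o, morphisms of type 'm,
  with carrier sets, domain/codomain, identities, composition (Comp g f = g after f),
  addition of parallel morphisms and zero morphisms.\<close>

record ('o, 'm) addcat =
  Obj  :: "'o set"
  Mor  :: "'m set"
  Dom  :: "'m \<Rightarrow> 'o"
  Cod  :: "'m \<Rightarrow> 'o"
  Id   :: "'o \<Rightarrow> 'm"
  Comp :: "'m \<Rightarrow> 'm \<Rightarrow> 'm"
  Add  :: "'m \<Rightarrow> 'm \<Rightarrow> 'm"
  Zero :: "'o \<Rightarrow> 'o \<Rightarrow> 'm"

definition hom :: "('o, 'm) addcat \<Rightarrow> 'o \<Rightarrow> 'o \<Rightarrow> 'm set" where
  "hom C a b = {f \<in> Mor C. Dom C f = a \<and> Cod C f = b}"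

definition category :: "('o, 'm) addcat \<Rightarrow> bool" where
  "category C \<longleftrightarrow>
     (\<forall>f\<in>Mor C. Dom C f \<in> Obj C \<and> Cod C f \<in> Obj C) \<and>
     (\<forall>a\<in>Obj C. Id C a \<in> hom C a a) \<and>
     (\<forall>f\<in>Mor C. \<forall>g\<in>Mor C. Cod C f = Dom C g \<longrightarrow> Comp C g f \<in> hom C (Dom C f) (Cod C g)) \<and>
     (\<forall>f\<in>Mor C. Comp C f (Id C (Dom C f)) = f \<and> Comp C (Id C (Cod C f)) f = f) \<and>
     (\<forall>f\<in>Mor C. \<forall>g\<in>Mor C. \<forall>h\<in>Mor C. Cod C f = Dom C g \<longrightarrow> Cod C g = Dom C h \<longrightarrow>
        Comp C h (Comp C g f) = Comp C (Comp C h g) f)"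

definition preadditive :: "('o, 'm) addcat \<Rightarrow> bool" where
  "preadditive C \<longleftrightarrow> category C \<and>
     (\<forall>a\<in>Obj C. \<forall>b\<in>Obj C.
        Zero C a b \<in> hom C a b \<and>
        (\<forall>f\<in>hom C a b. \<forall>g\<in>hom C a b. Add C f g \<in> hom C a b) \<and>
        (\<forall>f\<in>hom C a b. \<forall>g\<in>hom C a b. Add C f g = Add C g f) \<and>
        (\<forall>f\<in>hom C a b. \<forall>g\<in>hom C a b. \<forall>h\<in>hom C a b. Add C (Add C f g) h = Add C f (Add C g h)) \<and>
        (\<forall>f\<in>hom C a b. Add C f (Zero C a b) = f) \<and>
        (\<forall>f\<in>hom C a b. \<exists>g\<in>hom C a b. Add C f g = Zero C a b)) \<and>
     (\<forall>a\<in>Obj C. \<forall>b\<in>Obj C. \<forall>c\<in>Obj C.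
        (\<forall>f\<in>hom C a b. \<forall>g\<in>hom C b c. \<forall>g'\<in>hom C b c.
            Comp C (Add C g g') f = Add C (Comp C g f) (Comp C g' f)) \<and>
        (\<forall>f\<in>hom C a b. \<forall>f'\<in>hom C a b. \<forall>g\<in>hom C b c.
            Comp C g (Add C f f') = Add C (Comp C g f) (Comp C g f')))"

definition additive :: "('o, 'm) addcat \<Rightarrow> bool" where
  "additive C \<longleftrightarrow> preadditive C \<and>
     (\<exists>z\<in>Obj C. \<forall>a\<in>Obj C. (\<exists>!f. f \<in> hom C z a) \<and> (\<exists>!f. f \<in> hom C a z)) \<and>
     (\<forall>a\<in>Obj C. \<forall>b\<in>Obj C. \<exists>p\<in>Obj C. \<exists>i1 i2 p1 p2.
        i1 \<in> hom C a p \<and> i2 \<in> hom C b p \<and> p1 \<in> hom C p a \<and> p2 \<in> hom C p b \<and>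
        Comp C p1 i1 = Id C a \<and> Comp C p2 i2 = Id C b \<and>
        Add C (Comp C i1 p1) (Comp C i2 p2) = Id C p)"

definition is_kernel :: "('o, 'm) addcat \<Rightarrow> 'm \<Rightarrow> 'm \<Rightarrow> bool" where
  "is_kernel C i d \<longleftrightarrow> i \<in> Mor C \<and> d \<in> Mor C \<and> Cod C i = Dom C d \<and>
     Comp C d i = Zero C (Dom C i) (Cod C d) \<and>
     (\<forall>w\<in>Obj C. \<forall>f\<in>hom C w (Dom C d). Comp C d f = Zero C w (Cod C d) \<longrightarrow>
        (\<exists>!g. g \<in> hom C w (Dom C i) \<and> Comp C i g = f))"

definition is_cokernel :: "('o, 'm) addcat \<Rightarrow> 'm \<Rightarrow> 'm \<Rightarrow> bool" where
  "is_cokernel C d i \<longleftrightarrow> i \<in> Mor C \<and> d \<in> Mor C \<and> Cod C i = Dom C d \<and>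
     Comp C d i = Zero C (Dom C i) (Cod C d) \<and>
     (\<forall>w\<in>Obj C. \<forall>f\<in>hom C (Cod C i) w. Comp C f i = Zero C (Dom C i) w \<longrightarrow>
        (\<exists>!g. g \<in> hom C (Cod C d) w \<and> Comp C g d = f))"

definition kc_pair :: "('o, 'm) addcat \<Rightarrow> 'm \<Rightarrow> 'm \<Rightarrow> bool" where
  "kc_pair C i d \<longleftrightarrow> is_kernel C i d \<and> is_cokernel C d i"

definition iso :: "('o, 'm) addcat \<Rightarrow> 'm \<Rightarrow> bool" where
  "iso C f \<longleftrightarrow> f \<in> Mor C \<and>
     (\<exists>g\<in>hom C (Cod C f) (Dom C f). Comp C g f = Id C (Dom C f) \<and> Comp C f g = Id C (Cod C f))"

text \<open>A conflation X >-> Y ->> Z is represented by the pair (inflation, deflation).\<close>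
definition inflation :: "('o, 'm) addcat \<Rightarrow> ('m \<times> 'm) set \<Rightarrow> 'm \<Rightarrow> bool" where
  "inflation C E i \<longleftrightarrow> (\<exists>d. (i, d) \<in> E)"

definition deflation :: "('o, 'm) addcat \<Rightarrow> ('m \<times> 'm) set \<Rightarrow> 'm \<Rightarrow> bool" where
  "deflation C E d \<longleftrightarrow> (\<exists>i. (i, d) \<in> E)"

text \<open>Pushout square:  i : A -> B, f : A -> A', i' : A' -> P, f' : B -> P.\<close>
definition is_pushout :: "('o, 'm) addcat \<Rightarrow> 'm \<Rightarrow> 'm \<Rightarrow> 'm \<Rightarrow> 'm \<Rightarrow> bool" where
  "is_pushout C i f i' f' \<longleftrightarrow> i \<in> Mor C \<and> f \<in> Mor C \<and> i' \<in> Mor C \<and> f' \<in> Mor C \<and>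
     Dom C i = Dom C f \<and> Dom C i' = Cod C f \<and> Dom C f' = Cod C i \<and> Cod C i' = Cod C f' \<and>
     Comp C i' f = Comp C f' i \<and>
     (\<forall>w\<in>Obj C. \<forall>x\<in>hom C (Cod C f) w. \<forall>y\<in>hom C (Cod C i) w.
        Comp C x f = Comp C y i \<longrightarrow>
        (\<exists>!u. u \<in> hom C (Cod C i') w \<and> Comp C u i' = x \<and> Comp C u f' = y))"

text \<open>Pullback square:  d : B -> C, f : C' -> C, d' : P -> C', f' : P -> B.\<close>
definition is_pullback :: "('o, 'm) addcat \<Rightarrow> 'm \<Rightarrow> 'm \<Rightarrow> 'm \<Rightarrow> 'm \<Rightarrow> bool" where
  "is_pullback C d f d' f' \<longleftrightarrow> d \<in> Mor C \<and> f \<in> Mor C \<and> d' \<in> Mor C \<and> f' \<in> Mor C \<and>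
     Cod C d = Cod C f \<and> Cod C d' = Dom C f \<and> Cod C f' = Dom C d \<and> Dom C d' = Dom C f' \<and>
     Comp C d f' = Comp C f d' \<and>
     (\<forall>w\<in>Obj C. \<forall>x\<in>hom C w (Dom C f). \<forall>y\<in>hom C w (Dom C d).
        Comp C f x = Comp C d y \<longrightarrow>
        (\<exists>!u. u \<in> hom C w (Dom C d') \<and> Comp C d' u = x \<and> Comp C f' u = y))"

text \<open>Exact category in the sense of Quillen (axioms as in Buehler, Exact categories, Def. 2.1).\<close>
definition exact_category :: "('o, 'm) addcat \<Rightarrow> ('m \<times> 'm) set \<Rightarrow> bool" where
  "exact_category C E \<longleftrightarrow> additive C \<and>
     (\<forall>(i, d)\<in>E. kc_pair C i d) \<and>
     \<comment> \<open>closed under isomorphisms of short exact sequences\<close>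
     (\<forall>(i, d)\<in>E. \<forall>i' d' f g h.
        i' \<in> Mor C \<and> d' \<in> Mor C \<and> Cod C i' = Dom C d' \<and>
        iso C f \<and> iso C g \<and> iso C h \<and>
        f \<in> hom C (Dom C i) (Dom C i') \<and> g \<in> hom C (Cod C i) (Cod C i') \<and>
        h \<in> hom C (Cod C d) (Cod C d') \<and>
        Comp C i' f = Comp C g i \<and> Comp C d' g = Comp C h d \<longrightarrow> (i', d') \<in> E) \<and>
     \<comment> \<open>E0, E0op\<close>
     (\<forall>a\<in>Obj C. deflation C E (Id C a)) \<and>
     (\<forall>a\<in>Obj C. inflation C E (Id C a)) \<and>
     \<comment> \<open>E1, E1op\<close>
     (\<forall>d d'. deflation C E d \<and> deflation C E d' \<and> Cod C d = Dom C d' \<longrightarrow>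
        deflation C E (Comp C d' d)) \<and>
     (\<forall>i i'. inflation C E i \<and> inflation C E i' \<and> Cod C i = Dom C i' \<longrightarrow>
        inflation C E (Comp C i' i)) \<and>
     \<comment> \<open>E2: pushouts of inflations along arbitrary morphisms exist and are inflations\<close>
     (\<forall>i f. inflation C E i \<and> f \<in> Mor C \<and> Dom C f = Dom C i \<longrightarrow>
        (\<exists>i' f'. is_pushout C i f i' f' \<and> inflation C E i')) \<and>
     \<comment> \<open>E2op: pullbacks of deflations along arbitrary morphisms exist and are deflations\<close>
     (\<forall>d f. deflation C E d \<and> f \<in> Mor C \<and> Cod C f = Cod C d \<longrightarrow>
        (\<exists>d' f'. is_pullback C d f d' f' \<and> deflation C E d'))"

definition additive_functor ::
  "('o, 'm) addcat \<Rightarrow> ('p, 'n) addcat \<Rightarrow> ('o \<Rightarrow> 'p) \<Rightarrow> ('m \<Rightarrow> 'n) \<Rightarrow> bool" where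
  "additive_functor C D LO LM \<longleftrightarrow>
     (\<forall>a\<in>Obj C. LO a \<in> Obj D \<and> LM (Id C a) = Id D (LO a)) \<and>
     (\<forall>f\<in>Mor C. LM f \<in> hom D (LO (Dom C f)) (LO (Cod C f))) \<and>
     (\<forall>f\<in>Mor C. \<forall>g\<in>Mor C. Cod C f = Dom C g \<longrightarrow> LM (Comp C g f) = Comp D (LM g) (LM f)) \<and>
     (\<forall>a\<in>Obj C. \<forall>b\<in>Obj C. \<forall>f\<in>hom C a b. \<forall>g\<in>hom C a b.
        LM (Add C f g) = Add D (LM f) (LM g))"

definition exact_functor ::
  "('o, 'm) addcat \<Rightarrow> ('m \<times> 'm) set \<Rightarrow> ('p, 'n) addcat \<Rightarrow> ('n \<times> 'n) set \<Rightarrow>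
   ('o \<Rightarrow> 'p) \<Rightarrow> ('m \<Rightarrow> 'n) \<Rightarrow> bool" where
  "exact_functor C E D F LO LM \<longleftrightarrow> additive_functor C D LO LM \<and>
     (\<forall>(i, d)\<in>E. (LM i, LM d) \<in> F)"

end

theory Submission
  imports Defs
begin

locale pa =
  fixes C :: "('o,'m) addcat"
  assumes pa: "preadditive C"
begin

abbreviation cmp (infixl "\<cdot>" 70) where "g \<cdot> f \<equiv> Comp C g f"
abbreviation ad (infixl "\<oplus>" 65) where "f \<oplus> g \<equiv> Add C f g"
abbreviation "H \<equiv> hom C"
abbreviation "Z \<equiv> Zero C"
abbreviation "I \<equiv> Id C"

lemma cat: "category C" using pa unfolding preadditive_def by blast

lemma homD: assumes "f \<in> H a b" shows "f \<in> Mor C" "Dom C f = a" "Cod C f = b"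
  using assms unfolding hom_def by auto

lemma hom_obj: assumes "f \<in> H a b" shows "a \<in> Obj C" "b \<in> Obj C"
  using assms cat unfolding hom_def category_def by auto

lemma mor_hom: "f \<in> Mor C \<Longrightarrow> f \<in> H (Dom C f) (Cod C f)"
  unfolding hom_def by auto

lemma mor_obj: "f \<in> Mor C \<Longrightarrow> Dom C f \<in> Obj C \<and> Cod C f \<in> Obj C"
  using cat unfolding category_def by auto

lemma comp_hom[intro]: "f \<in> H a b \<Longrightarrow> g \<in> H b c \<Longrightarrow> g \<cdot> f \<in> H a c"
  using cat unfolding category_def hom_def by auto

lemma id_hom[intro]: "a \<in> Obj C \<Longrightarrow> I a \<in> H a a"
  using cat unfolding category_def by auto

lemma id_l[simp]: "f \<in> H a b \<Longrightarrow> I b \<cdot> f = f"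
  using cat unfolding category_def hom_def by auto

lemma id_r[simp]: "f \<in> H a b \<Longrightarrow> f \<cdot> I a = f"
  using cat unfolding category_def hom_def by auto

lemma assoc: "f \<in> H a b \<Longrightarrow> g \<in> H b c \<Longrightarrow> h \<in> H c d \<Longrightarrow> h \<cdot> (g \<cdot> f) = (h \<cdot> g) \<cdot> f"
  using cat unfolding category_def hom_def by auto

lemma zero_hom[intro]: "a \<in> Obj C \<Longrightarrow> b \<in> Obj C \<Longrightarrow> Z a b \<in> H a b"
  using pa unfolding preadditive_def by auto

lemma add_hom[intro]: "f \<in> H a b \<Longrightarrow> g \<in> H a b \<Longrightarrow> f \<oplus> g \<in> H a b"
  using pa hom_obj unfolding preadditive_def by blast

lemma add_comm: "f \<in> H a b \<Longrightarrow> g \<in> H a b \<Longrightarrow> f \<oplus> g = g \<oplus> f"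
  using pa hom_obj unfolding preadditive_def by blast

lemma add_assoc: "f \<in> H a b \<Longrightarrow> g \<in> H a b \<Longrightarrow> h \<in> H a b \<Longrightarrow> (f \<oplus> g) \<oplus> h = f \<oplus> (g \<oplus> h)"
  using pa hom_obj unfolding preadditive_def by blast

lemma add_zero[simp]: "f \<in> H a b \<Longrightarrow> f \<oplus> Z a b = f"
  using pa hom_obj unfolding preadditive_def by blast

lemma zero_add[simp]: "f \<in> H a b \<Longrightarrow> Z a b \<oplus> f = f"
  using add_comm add_zero hom_obj zero_hom by metis

lemma ex_neg: "f \<in> H a b \<Longrightarrow> \<exists>g\<in>H a b. f \<oplus> g = Z a b"
  using pa hom_obj unfolding preadditive_def by blast

lemma distl: "f \<in> H a b \<Longrightarrow> g \<in> H b c \<Longrightarrow> g' \<in> H b c \<Longrightarrow> (g \<oplus> g') \<cdot> f = g \<cdot> f \<oplus> g' \<cdot> f"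
  using pa hom_obj unfolding preadditive_def by blast

lemma distr: "f \<in> H a b \<Longrightarrow> f' \<in> H a b \<Longrightarrow> g \<in> H b c \<Longrightarrow> g \<cdot> (f \<oplus> f') = g \<cdot> f \<oplus> g \<cdot> f'"
  using pa hom_obj unfolding preadditive_def by blast

lemma cancel: assumes "x \<in> H a b" "y \<in> H a b" "z \<in> H a b" "x \<oplus> y = x \<oplus> z" shows "y = z"
proof -
  obtain n where n: "n \<in> H a b" "x \<oplus> n = Z a b" using ex_neg assms by blast
  have "n \<oplus> (x \<oplus> y) = n \<oplus> (x \<oplus> z)" using assms by simp
  hence "(n \<oplus> x) \<oplus> y = (n \<oplus> x) \<oplus> z" using add_assoc assms n by metis
  hence "(x \<oplus> n) \<oplus> y = (x \<oplus> n) \<oplus> z" using add_comm assms n by metis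
  thus ?thesis using n assms by simp
qed

lemma zero_unique: assumes "x \<in> H a b" "y \<in> H a b" "x \<oplus> y = x" shows "y = Z a b"
proof -
  have z: "Z a b \<in> H a b" using assms hom_obj by blast
  have "x \<oplus> y = x \<oplus> Z a b" using assms by simp
  thus ?thesis using cancel[OF assms(1) assms(2) z] by blast
qed

lemma comp_zero_r[simp]: assumes "g \<in> H b c" "a \<in> Obj C" shows "g \<cdot> Z a b = Z a c"
proof -
  have b: "b \<in> Obj C" using assms hom_obj by auto
  have h: "g \<cdot> Z a b \<in> H a c" using assms b by blast
  have "g \<cdot> Z a b \<oplus> g \<cdot> Z a b = g \<cdot> (Z a b \<oplus> Z a b)" using distr[OF zero_hom[OF assms(2) b] zero_hom[OF assms(2) b] assms(1)] by simp
  also have "\<dots> = g \<cdot> Z a b" using add_zero[OF zero_hom[OF assms(2) b]] by simp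
  finally show ?thesis using zero_unique h by blast
qed

lemma comp_zero_l[simp]: assumes "f \<in> H a b" "c \<in> Obj C" shows "Z b c \<cdot> f = Z a c"
proof -
  have b: "b \<in> Obj C" using assms hom_obj by auto
  have h: "Z b c \<cdot> f \<in> H a c" using assms b by blast
  have "Z b c \<cdot> f \<oplus> Z b c \<cdot> f = (Z b c \<oplus> Z b c) \<cdot> f" using distl[OF assms(1) zero_hom[OF b assms(2)] zero_hom[OF b assms(2)]] by simp
  also have "\<dots> = Z b c \<cdot> f" using add_zero[OF zero_hom[OF b assms(2)]] by simp
  finally show ?thesis using zero_unique h by blast
qed

definition neg where "neg f = (SOME g. g \<in> H (Dom C f) (Cod C f) \<and> f \<oplus> g = Z (Dom C f) (Cod C f))"

lemma neg: assumes "f \<in> H a b" shows "neg f \<in> H a b" "f \<oplus> neg f = Z a b" "neg f \<oplus> f = Z a b"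
proof -
  have "\<exists>g. g \<in> H (Dom C f) (Cod C f) \<and> f \<oplus> g = Z (Dom C f) (Cod C f)"
    using ex_neg assms homD by metis
  hence "neg f \<in> H (Dom C f) (Cod C f) \<and> f \<oplus> neg f = Z (Dom C f) (Cod C f)"
    unfolding neg_def by (rule someI_ex)
  thus "neg f \<in> H a b" "f \<oplus> neg f = Z a b" using assms homD by auto
  thus "neg f \<oplus> f = Z a b" using add_comm assms by metis
qed

lemma neg_unique: assumes "f \<in> H a b" "g \<in> H a b" "f \<oplus> g = Z a b" shows "g = neg f"
  using cancel[of f a b g "neg f"] neg[OF assms(1)] assms by auto

lemma comp_neg_r: assumes "f \<in> H a b" "g \<in> H b c" shows "g \<cdot> neg f = neg (g \<cdot> f)"
proof -
  have "g \<cdot> f \<oplus> g \<cdot> neg f = g \<cdot> (f \<oplus> neg f)" using distr assms neg by metis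
  also have "\<dots> = Z a c" using neg assms hom_obj by auto
  finally show ?thesis using neg_unique assms neg by blast
qed

lemma comp_neg_l: assumes "f \<in> H a b" "g \<in> H b c" shows "neg g \<cdot> f = neg (g \<cdot> f)"
proof -
  have "g \<cdot> f \<oplus> neg g \<cdot> f = (g \<oplus> neg g) \<cdot> f" using distl assms neg by metis
  also have "\<dots> = Z a c" using neg assms hom_obj by auto
  finally show ?thesis using neg_unique assms neg by blast
qed

lemma obj_dom[simp]: "f \<in> Mor C \<Longrightarrow> Dom C f \<in> Obj C" using mor_obj by blast
lemma obj_cod[simp]: "f \<in> Mor C \<Longrightarrow> Cod C f \<in> Obj C" using mor_obj by blast

lemma comp_props: "f \<in> Mor C \<Longrightarrow> g \<in> Mor C \<Longrightarrow> Cod C f = Dom C g \<Longrightarrow>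
   g \<cdot> f \<in> Mor C \<and> Dom C (g \<cdot> f) = Dom C f \<and> Cod C (g \<cdot> f) = Cod C g"
  using comp_hom[of f "Dom C f" "Cod C f" g "Cod C g"] unfolding hom_def by auto
lemma comp_mor[simp]: "f \<in> Mor C \<Longrightarrow> g \<in> Mor C \<Longrightarrow> Cod C f = Dom C g \<Longrightarrow> g \<cdot> f \<in> Mor C"
  using comp_props by blast
lemma dom_comp[simp]: "f \<in> Mor C \<Longrightarrow> g \<in> Mor C \<Longrightarrow> Cod C f = Dom C g \<Longrightarrow> Dom C (g \<cdot> f) = Dom C f"
  using comp_props by blast
lemma cod_comp[simp]: "f \<in> Mor C \<Longrightarrow> g \<in> Mor C \<Longrightarrow> Cod C f = Dom C g \<Longrightarrow> Cod C (g \<cdot> f) = Cod C g"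
  using comp_props by blast
lemma assocM: "f \<in> Mor C \<Longrightarrow> g \<in> Mor C \<Longrightarrow> h \<in> Mor C \<Longrightarrow> Cod C f = Dom C g \<Longrightarrow> Cod C g = Dom C h \<Longrightarrow>
   (h \<cdot> g) \<cdot> f = h \<cdot> (g \<cdot> f)"
  using assoc[of f "Dom C f" "Cod C f" g "Cod C g" h "Cod C h"] unfolding hom_def by auto

lemma id_props: "a \<in> Obj C \<Longrightarrow> I a \<in> Mor C \<and> Dom C (I a) = a \<and> Cod C (I a) = a"
  using id_hom[of a] unfolding hom_def by auto
lemma id_mor[simp]: "a \<in> Obj C \<Longrightarrow> I a \<in> Mor C" using id_props by blast
lemma dom_id[simp]: "a \<in> Obj C \<Longrightarrow> Dom C (I a) = a" using id_props by blast
lemma cod_id[simp]: "a \<in> Obj C \<Longrightarrow> Cod C (I a) = a" using id_props by blast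
lemma idlM[simp]: "f \<in> Mor C \<Longrightarrow> Cod C f = b \<Longrightarrow> I b \<cdot> f = f" using id_l mor_hom by blast
lemma idrM[simp]: "f \<in> Mor C \<Longrightarrow> Dom C f = a \<Longrightarrow> f \<cdot> I a = f" using id_r mor_hom by blast

lemma zero_props: "a \<in> Obj C \<Longrightarrow> b \<in> Obj C \<Longrightarrow> Z a b \<in> Mor C \<and> Dom C (Z a b) = a \<and> Cod C (Z a b) = b"
  using zero_hom[of a b] unfolding hom_def by auto
lemma zero_mor[simp]: "a \<in> Obj C \<Longrightarrow> b \<in> Obj C \<Longrightarrow> Z a b \<in> Mor C" using zero_props by blast
lemma dom_zero[simp]: "a \<in> Obj C \<Longrightarrow> b \<in> Obj C \<Longrightarrow> Dom C (Z a b) = a" using zero_props by blast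
lemma cod_zero[simp]: "a \<in> Obj C \<Longrightarrow> b \<in> Obj C \<Longrightarrow> Cod C (Z a b) = b" using zero_props by blast
lemma zero_rM[simp]: "g \<in> Mor C \<Longrightarrow> Dom C g = b \<Longrightarrow> a \<in> Obj C \<Longrightarrow> g \<cdot> Z a b = Z a (Cod C g)"
  using comp_zero_r mor_hom by blast
lemma zero_lM[simp]: "f \<in> Mor C \<Longrightarrow> Cod C f = b \<Longrightarrow> c \<in> Obj C \<Longrightarrow> Z b c \<cdot> f = Z (Dom C f) c"
  using comp_zero_l mor_hom by blast

lemma add_props: "f \<in> Mor C \<Longrightarrow> g \<in> Mor C \<Longrightarrow> Dom C f = Dom C g \<Longrightarrow> Cod C f = Cod C g \<Longrightarrow>
   f \<oplus> g \<in> Mor C \<and> Dom C (f \<oplus> g) = Dom C f \<and> Cod C (f \<oplus> g) = Cod C f"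
  using add_hom[of f "Dom C f" "Cod C f" g] unfolding hom_def by auto
lemma add_mor[simp]: "f \<in> Mor C \<Longrightarrow> g \<in> Mor C \<Longrightarrow> Dom C f = Dom C g \<Longrightarrow> Cod C f = Cod C g \<Longrightarrow> f \<oplus> g \<in> Mor C"
  using add_props by blast
lemma dom_add[simp]: "f \<in> Mor C \<Longrightarrow> g \<in> Mor C \<Longrightarrow> Dom C f = Dom C g \<Longrightarrow> Cod C f = Cod C g \<Longrightarrow> Dom C (f \<oplus> g) = Dom C f"
  using add_props by blast
lemma cod_add[simp]: "f \<in> Mor C \<Longrightarrow> g \<in> Mor C \<Longrightarrow> Dom C f = Dom C g \<Longrightarrow> Cod C f = Cod C g \<Longrightarrow> Cod C (f \<oplus> g) = Cod C f"
  using add_props by blast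
lemma add_commM: "f \<in> Mor C \<Longrightarrow> g \<in> Mor C \<Longrightarrow> Dom C f = Dom C g \<Longrightarrow> Cod C f = Cod C g \<Longrightarrow> f \<oplus> g = g \<oplus> f"
  using add_comm[of f "Dom C f" "Cod C f" g] unfolding hom_def by auto
lemma add_assocM: "f \<in> Mor C \<Longrightarrow> g \<in> Mor C \<Longrightarrow> h \<in> Mor C \<Longrightarrow> Dom C f = Dom C g \<Longrightarrow> Cod C f = Cod C g
   \<Longrightarrow> Dom C f = Dom C h \<Longrightarrow> Cod C f = Cod C h \<Longrightarrow> (f \<oplus> g) \<oplus> h = f \<oplus> (g \<oplus> h)"
  using add_assoc[of f "Dom C f" "Cod C f" g h] unfolding hom_def by auto
lemma add_zeroM[simp]: "f \<in> Mor C \<Longrightarrow> Dom C f = a \<Longrightarrow> Cod C f = b \<Longrightarrow> f \<oplus> Z a b = f"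
  using add_zero mor_hom by blast
lemma zero_addM[simp]: "f \<in> Mor C \<Longrightarrow> Dom C f = a \<Longrightarrow> Cod C f = b \<Longrightarrow> Z a b \<oplus> f = f"
  using zero_add mor_hom by blast
lemma distlM: "f \<in> Mor C \<Longrightarrow> g \<in> Mor C \<Longrightarrow> g' \<in> Mor C \<Longrightarrow> Cod C f = Dom C g \<Longrightarrow> Dom C g = Dom C g'
   \<Longrightarrow> Cod C g = Cod C g' \<Longrightarrow> (g \<oplus> g') \<cdot> f = g \<cdot> f \<oplus> g' \<cdot> f"
  using distl[of f "Dom C f" "Cod C f" g "Cod C g" g'] unfolding hom_def by auto
lemma distrM: "f \<in> Mor C \<Longrightarrow> f' \<in> Mor C \<Longrightarrow> g \<in> Mor C \<Longrightarrow> Cod C f = Dom C g \<Longrightarrow> Dom C f = Dom C f'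
   \<Longrightarrow> Cod C f = Cod C f' \<Longrightarrow> g \<cdot> (f \<oplus> f') = g \<cdot> f \<oplus> g \<cdot> f'"
  using distr[of f "Dom C f" "Cod C f" f' g "Cod C g"] unfolding hom_def by auto

lemma neg_props: "f \<in> Mor C \<Longrightarrow> neg f \<in> Mor C \<and> Dom C (neg f) = Dom C f \<and> Cod C (neg f) = Cod C f"
  using neg(1)[of f "Dom C f" "Cod C f"] unfolding hom_def by auto
lemma neg_mor[simp]: "f \<in> Mor C \<Longrightarrow> neg f \<in> Mor C" using neg_props by blast
lemma dom_neg[simp]: "f \<in> Mor C \<Longrightarrow> Dom C (neg f) = Dom C f" using neg_props by blast
lemma cod_neg[simp]: "f \<in> Mor C \<Longrightarrow> Cod C (neg f) = Cod C f" using neg_props by blast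
lemma add_negM[simp]: "f \<in> Mor C \<Longrightarrow> f \<oplus> neg f = Z (Dom C f) (Cod C f)" using neg(2)[OF mor_hom] by metis
lemma neg_addM[simp]: "f \<in> Mor C \<Longrightarrow> neg f \<oplus> f = Z (Dom C f) (Cod C f)" using neg(3)[OF mor_hom] by metis
lemma comp_neg_rM[simp]: "f \<in> Mor C \<Longrightarrow> g \<in> Mor C \<Longrightarrow> Cod C f = Dom C g \<Longrightarrow> g \<cdot> neg f = neg (g \<cdot> f)"
  using comp_neg_r[of f "Dom C f" "Cod C f" g "Cod C g"] unfolding hom_def by auto
lemma comp_neg_lM[simp]: "f \<in> Mor C \<Longrightarrow> g \<in> Mor C \<Longrightarrow> Cod C f = Dom C g \<Longrightarrow> neg g \<cdot> f = neg (g \<cdot> f)"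
  using comp_neg_l[of f "Dom C f" "Cod C f" g "Cod C g"] unfolding hom_def by auto

lemma kerD: assumes "is_kernel C i d"
  shows "i \<in> Mor C" "d \<in> Mor C" "Cod C i = Dom C d" "d \<cdot> i = Z (Dom C i) (Cod C d)"
  using assms unfolding is_kernel_def by auto

lemma kerU: assumes "is_kernel C i d" "w \<in> Obj C" "f \<in> H w (Dom C d)" "d \<cdot> f = Z w (Cod C d)"
  shows "\<exists>!g. g \<in> H w (Dom C i) \<and> i \<cdot> g = f"
proof -
  have "\<forall>w\<in>Obj C. \<forall>f\<in>H w (Dom C d). d \<cdot> f = Z w (Cod C d) \<longrightarrow> (\<exists>!g. g \<in> H w (Dom C i) \<and> i \<cdot> g = f)"
    using assms(1) unfolding is_kernel_def by (elim conjE)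
  thus ?thesis using assms(2-4) by blast
qed

lemma ker_fact: assumes "is_kernel C i d" "f \<in> Mor C" "Cod C f = Dom C d" "d \<cdot> f = Z (Dom C f) (Cod C d)"
  shows "\<exists>g. g \<in> Mor C \<and> Dom C g = Dom C f \<and> Cod C g = Dom C i \<and> i \<cdot> g = f"
proof -
  have "f \<in> H (Dom C f) (Dom C d)" using assms unfolding hom_def by auto
  then obtain g where "g \<in> H (Dom C f) (Dom C i)" "i \<cdot> g = f"
    using kerU[OF assms(1) _ _ assms(4)] assms(2) by (meson obj_dom)
  thus ?thesis unfolding hom_def by auto
qed

lemma ker_mono: assumes "is_kernel C i d" "x \<in> Mor C" "y \<in> Mor C" "Dom C x = Dom C y"
   "Cod C x = Dom C i" "Cod C y = Dom C i" "i \<cdot> x = i \<cdot> y" shows "x = y"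
proof -
  let ?w = "Dom C x"
  have d: "i \<in> Mor C" "d \<in> Mor C" "Cod C i = Dom C d" "d \<cdot> i = Z (Dom C i) (Cod C d)" using kerD assms by auto
  have f: "i \<cdot> x \<in> H ?w (Dom C d)" using assms d unfolding hom_def by auto
  have "d \<cdot> (i \<cdot> x) = (d \<cdot> i) \<cdot> x" using assocM assms d by metis
  also have "\<dots> = Z ?w (Cod C d)" using d assms by simp
  finally have u: "\<exists>!g. g \<in> H ?w (Dom C i) \<and> i \<cdot> g = i \<cdot> x"
    using kerU[OF assms(1) _ f] assms(2) obj_dom by blast
  have "x \<in> H ?w (Dom C i)" "y \<in> H ?w (Dom C i)" using assms unfolding hom_def by auto
  with u assms(7) show ?thesis by (metis (no_types, lifting))
qed

lemma cokD: assumes "is_cokernel C d i"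
  shows "i \<in> Mor C" "d \<in> Mor C" "Cod C i = Dom C d" "d \<cdot> i = Z (Dom C i) (Cod C d)"
  using assms unfolding is_cokernel_def by auto

lemma cokU: assumes "is_cokernel C d i" "w \<in> Obj C" "f \<in> H (Cod C i) w" "f \<cdot> i = Z (Dom C i) w"
  shows "\<exists>!g. g \<in> H (Cod C d) w \<and> g \<cdot> d = f"
proof -
  have "\<forall>w\<in>Obj C. \<forall>f\<in>H (Cod C i) w. f \<cdot> i = Z (Dom C i) w \<longrightarrow> (\<exists>!g. g \<in> H (Cod C d) w \<and> g \<cdot> d = f)"
    using assms(1) unfolding is_cokernel_def by (elim conjE)
  thus ?thesis using assms(2-4) by blast
qed

lemma cok_fact: assumes "is_cokernel C d i" "f \<in> Mor C" "Dom C f = Cod C i" "f \<cdot> i = Z (Dom C i) (Cod C f)"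
  shows "\<exists>g. g \<in> Mor C \<and> Dom C g = Cod C d \<and> Cod C g = Cod C f \<and> g \<cdot> d = f"
proof -
  have "f \<in> H (Cod C i) (Cod C f)" using assms unfolding hom_def by auto
  then obtain g where "g \<in> H (Cod C d) (Cod C f)" "g \<cdot> d = f"
    using cokU[OF assms(1) _ _ assms(4)] assms(2) by (meson obj_cod)
  thus ?thesis unfolding hom_def by auto
qed

lemma cok_epi: assumes "is_cokernel C d i" "x \<in> Mor C" "y \<in> Mor C" "Cod C x = Cod C y"
   "Dom C x = Cod C d" "Dom C y = Cod C d" "x \<cdot> d = y \<cdot> d" shows "x = y"
proof -
  let ?w = "Cod C x"
  have d: "i \<in> Mor C" "d \<in> Mor C" "Cod C i = Dom C d" "d \<cdot> i = Z (Dom C i) (Cod C d)" using cokD assms by auto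
  have f: "x \<cdot> d \<in> H (Cod C i) ?w" using assms d unfolding hom_def by auto
  have "(x \<cdot> d) \<cdot> i = x \<cdot> (d \<cdot> i)" using assocM assms d by metis
  also have "\<dots> = Z (Dom C i) ?w" using d assms by simp
  finally have u: "\<exists>!g. g \<in> H (Cod C d) ?w \<and> g \<cdot> d = x \<cdot> d"
    using cokU[OF assms(1) _ f] assms(2) obj_cod by blast
  have "x \<in> H (Cod C d) ?w" "y \<in> H (Cod C d) ?w" using assms unfolding hom_def by auto
  with u assms(7) show ?thesis by (metis (no_types, lifting))
qed


lemma poD: assumes "is_pushout C i f i' f'"
  shows "i \<in> Mor C" "f \<in> Mor C" "i' \<in> Mor C" "f' \<in> Mor C" "Dom C i = Dom C f" "Dom C i' = Cod C f"
    "Dom C f' = Cod C i" "Cod C i' = Cod C f'" "i' \<cdot> f = f' \<cdot> i"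
  using assms unfolding is_pushout_def by auto

lemma poU: assumes "is_pushout C i f i' f'" "x \<in> Mor C" "y \<in> Mor C" "Dom C x = Cod C f" "Dom C y = Cod C i"
  "Cod C x = Cod C y" "x \<cdot> f = y \<cdot> i"
  shows "\<exists>!u. u \<in> H (Cod C i') (Cod C x) \<and> u \<cdot> i' = x \<and> u \<cdot> f' = y"
proof -
  have "\<forall>w\<in>Obj C. \<forall>x\<in>H (Cod C f) w. \<forall>y\<in>H (Cod C i) w. x \<cdot> f = y \<cdot> i \<longrightarrow>
        (\<exists>!u. u \<in> H (Cod C i') w \<and> u \<cdot> i' = x \<and> u \<cdot> f' = y)"
    using assms(1) unfolding is_pushout_def by (elim conjE)
  note all = this
  have "x \<in> H (Cod C f) (Cod C x)" "y \<in> H (Cod C i) (Cod C x)" using assms unfolding hom_def by auto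
  thus ?thesis using all[rule_format, OF obj_cod[OF assms(2)] _ _ assms(7)] by blast
qed

lemma po_ex: assumes "is_pushout C i f i' f'" "x \<in> Mor C" "y \<in> Mor C" "Dom C x = Cod C f" "Dom C y = Cod C i"
  "Cod C x = Cod C y" "x \<cdot> f = y \<cdot> i"
  shows "\<exists>u. u \<in> Mor C \<and> Dom C u = Cod C i' \<and> Cod C u = Cod C x \<and> u \<cdot> i' = x \<and> u \<cdot> f' = y"
  using poU[OF assms] unfolding hom_def by auto

lemma po_uniq: assumes "is_pushout C i f i' f'" "u \<in> Mor C" "v \<in> Mor C" "Dom C u = Cod C i'" "Dom C v = Cod C i'"
  "Cod C u = Cod C v" "u \<cdot> i' = v \<cdot> i'" "u \<cdot> f' = v \<cdot> f'" shows "u = v"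
proof -
  have p: "i \<in> Mor C" "f \<in> Mor C" "i' \<in> Mor C" "f' \<in> Mor C" "Dom C i = Dom C f" "Dom C i' = Cod C f"
    "Dom C f' = Cod C i" "Cod C i' = Cod C f'" "i' \<cdot> f = f' \<cdot> i" using poD[OF assms(1)] by auto
  have "(u \<cdot> i') \<cdot> f = (u \<cdot> f') \<cdot> i" using p assocM assms by metis
  hence "\<exists>!w. w \<in> H (Cod C i') (Cod C (u \<cdot> i')) \<and> w \<cdot> i' = u \<cdot> i' \<and> w \<cdot> f' = u \<cdot> f'"
    using poU[OF assms(1), of "u \<cdot> i'" "u \<cdot> f'"] p assms by simp
  moreover have "u \<in> H (Cod C i') (Cod C (u \<cdot> i'))" "v \<in> H (Cod C i') (Cod C (u \<cdot> i'))"
    using assms p unfolding hom_def by auto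
  ultimately show ?thesis using assms by metis
qed

lemma pbD: assumes "is_pullback C d f d' f'"
  shows "d \<in> Mor C" "f \<in> Mor C" "d' \<in> Mor C" "f' \<in> Mor C" "Cod C d = Cod C f" "Cod C d' = Dom C f"
    "Cod C f' = Dom C d" "Dom C d' = Dom C f'" "d \<cdot> f' = f \<cdot> d'"
  using assms unfolding is_pullback_def by auto

lemma pbU: assumes "is_pullback C d f d' f'" "x \<in> Mor C" "y \<in> Mor C" "Cod C x = Dom C f" "Cod C y = Dom C d"
  "Dom C x = Dom C y" "f \<cdot> x = d \<cdot> y"
  shows "\<exists>!u. u \<in> H (Dom C x) (Dom C d') \<and> d' \<cdot> u = x \<and> f' \<cdot> u = y"
proof -
  have "\<forall>w\<in>Obj C. \<forall>x\<in>H w (Dom C f). \<forall>y\<in>H w (Dom C d). f \<cdot> x = d \<cdot> y \<longrightarrow>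
        (\<exists>!u. u \<in> H w (Dom C d') \<and> d' \<cdot> u = x \<and> f' \<cdot> u = y)"
    using assms(1) unfolding is_pullback_def by (elim conjE)
  note all = this
  have "x \<in> H (Dom C x) (Dom C f)" "y \<in> H (Dom C x) (Dom C d)" using assms unfolding hom_def by auto
  thus ?thesis using all[rule_format, OF obj_dom[OF assms(2)] _ _ assms(7)] by blast
qed

lemma pb_ex: assumes "is_pullback C d f d' f'" "x \<in> Mor C" "y \<in> Mor C" "Cod C x = Dom C f" "Cod C y = Dom C d"
  "Dom C x = Dom C y" "f \<cdot> x = d \<cdot> y"
  shows "\<exists>u. u \<in> Mor C \<and> Dom C u = Dom C x \<and> Cod C u = Dom C d' \<and> d' \<cdot> u = x \<and> f' \<cdot> u = y"
  using pbU[OF assms] unfolding hom_def by auto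

lemma pb_uniq: assumes "is_pullback C d f d' f'" "u \<in> Mor C" "v \<in> Mor C" "Cod C u = Dom C d'" "Cod C v = Dom C d'"
  "Dom C u = Dom C v" "d' \<cdot> u = d' \<cdot> v" "f' \<cdot> u = f' \<cdot> v" shows "u = v"
proof -
  have p: "d \<in> Mor C" "f \<in> Mor C" "d' \<in> Mor C" "f' \<in> Mor C" "Cod C d = Cod C f" "Cod C d' = Dom C f"
    "Cod C f' = Dom C d" "Dom C d' = Dom C f'" "d \<cdot> f' = f \<cdot> d'" using pbD[OF assms(1)] by auto
  have "f \<cdot> (d' \<cdot> u) = d \<cdot> (f' \<cdot> u)" using p assocM assms by metis
  hence "\<exists>!w. w \<in> H (Dom C (d' \<cdot> u)) (Dom C d') \<and> d' \<cdot> w = d' \<cdot> u \<and> f' \<cdot> w = f' \<cdot> u"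
    using pbU[OF assms(1), of "d' \<cdot> u" "f' \<cdot> u"] p assms by simp
  moreover have "u \<in> H (Dom C (d' \<cdot> u)) (Dom C d')" "v \<in> H (Dom C (d' \<cdot> u)) (Dom C d')"
    using assms p unfolding hom_def by auto
  ultimately show ?thesis using assms by metis
qed

lemma po_cok: assumes po: "is_pushout C i f i' f'" and ck: "is_cokernel C d i"
  shows "\<exists>d''. d'' \<in> Mor C \<and> Dom C d'' = Cod C i' \<and> Cod C d'' = Cod C d \<and> d'' \<cdot> f' = d \<and> is_cokernel C d'' i'"
proof -
  have p: "i \<in> Mor C" "f \<in> Mor C" "i' \<in> Mor C" "f' \<in> Mor C" "Dom C i = Dom C f" "Dom C i' = Cod C f"
    "Dom C f' = Cod C i" "Cod C i' = Cod C f'" "i' \<cdot> f = f' \<cdot> i" using poD[OF po] by auto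
  have c: "d \<in> Mor C" "Cod C i = Dom C d" "d \<cdot> i = Z (Dom C i) (Cod C d)" using cokD[OF ck] by auto
  have "Z (Cod C f) (Cod C d) \<cdot> f = d \<cdot> i" using p c by simp
  then obtain d'' where d'': "d'' \<in> Mor C" "Dom C d'' = Cod C i'" "Cod C d'' = Cod C d"
     "d'' \<cdot> i' = Z (Cod C f) (Cod C d)" "d'' \<cdot> f' = d"
    using po_ex[OF po, of "Z (Cod C f) (Cod C d)" d] p c by auto
  have "is_cokernel C d'' i'"
    unfolding is_cokernel_def
  proof (intro conjI ballI impI)
    show "i' \<in> Mor C" "d'' \<in> Mor C" "Cod C i' = Dom C d''" using p d'' by auto
    show "d'' \<cdot> i' = Z (Dom C i') (Cod C d'')" using p d'' by simp
  next
    fix w x assume w: "w \<in> Obj C" and x: "x \<in> H (Cod C i') w" and xz: "x \<cdot> i' = Z (Dom C i') w"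
    have xm: "x \<in> Mor C" "Dom C x = Cod C i'" "Cod C x = w" using x unfolding hom_def by auto
    have "(x \<cdot> f') \<cdot> i = x \<cdot> (f' \<cdot> i)" using assocM p xm by metis
    also have "\<dots> = (x \<cdot> i') \<cdot> f" using assocM p xm by metis
    also have "\<dots> = Z (Dom C i) w" using xz p w by simp
    finally have e: "(x \<cdot> f') \<cdot> i = Z (Dom C i) (Cod C (x \<cdot> f'))" using p xm by simp
    obtain v where v: "v \<in> Mor C" "Dom C v = Cod C d" "Cod C v = w" "v \<cdot> d = x \<cdot> f'"
      using cok_fact[OF ck _ _ e] p xm by auto
    have "v \<cdot> d'' = x"
    proof (rule po_uniq[OF po])
      show "v \<cdot> d'' \<in> Mor C" "x \<in> Mor C" "Dom C (v \<cdot> d'') = Cod C i'" "Dom C x = Cod C i'"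
        "Cod C (v \<cdot> d'') = Cod C x" using v d'' xm by auto
      have "(v \<cdot> d'') \<cdot> i' = v \<cdot> (d'' \<cdot> i')" using assocM v d'' p by metis
      also have "\<dots> = Z (Cod C f) w" using v d'' p by simp
      finally show "(v \<cdot> d'') \<cdot> i' = x \<cdot> i'" using xz p by simp
      have "(v \<cdot> d'') \<cdot> f' = v \<cdot> (d'' \<cdot> f')" using assocM v d'' p by metis
      thus "(v \<cdot> d'') \<cdot> f' = x \<cdot> f'" using v d'' by simp
    qed
    hence ex: "v \<in> H (Cod C d'') w \<and> v \<cdot> d'' = x" using v d'' unfolding hom_def by auto
    show "\<exists>!g. g \<in> H (Cod C d'') w \<and> g \<cdot> d'' = x"
    proof (rule ex1I[of _ v])
      show "v \<in> H (Cod C d'') w \<and> v \<cdot> d'' = x" by (rule ex)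
    next
      fix g assume g: "g \<in> H (Cod C d'') w \<and> g \<cdot> d'' = x"
      have gm: "g \<in> Mor C" "Dom C g = Cod C d" "Cod C g = w" using g d'' unfolding hom_def by auto
      have "g \<cdot> d = (g \<cdot> d'') \<cdot> f'" using assocM gm d'' p by metis
      also have "\<dots> = (v \<cdot> d'') \<cdot> f'" using g ex by simp
      also have "\<dots> = v \<cdot> d" using assocM v d'' p by metis
      finally show "g = v" using cok_epi[OF ck gm(1) v(1)] gm v by auto
    qed
  qed
  thus ?thesis using d'' by blast
qed

lemma pb_ker: assumes pb: "is_pullback C d f d' f'" and kk: "is_kernel C i d"
  shows "\<exists>i''. i'' \<in> Mor C \<and> Cod C i'' = Dom C d' \<and> Dom C i'' = Dom C i \<and> f' \<cdot> i'' = i \<and> is_kernel C i'' d'"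
proof -
  have p: "d \<in> Mor C" "f \<in> Mor C" "d' \<in> Mor C" "f' \<in> Mor C" "Cod C d = Cod C f" "Cod C d' = Dom C f"
    "Cod C f' = Dom C d" "Dom C d' = Dom C f'" "d \<cdot> f' = f \<cdot> d'" using pbD[OF pb] by auto
  have c: "i \<in> Mor C" "Cod C i = Dom C d" "d \<cdot> i = Z (Dom C i) (Cod C d)" using kerD[OF kk] by auto
  have "f \<cdot> Z (Dom C i) (Dom C f) = d \<cdot> i" using p c by simp
  then obtain i'' where i'': "i'' \<in> Mor C" "Dom C i'' = Dom C i" "Cod C i'' = Dom C d'"
     "d' \<cdot> i'' = Z (Dom C i) (Dom C f)" "f' \<cdot> i'' = i"
    using pb_ex[OF pb, of "Z (Dom C i) (Dom C f)" i] p c by auto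
  have "is_kernel C i'' d'"
    unfolding is_kernel_def
  proof (intro conjI ballI impI)
    show "i'' \<in> Mor C" "d' \<in> Mor C" "Cod C i'' = Dom C d'" using p i'' by auto
    show "d' \<cdot> i'' = Z (Dom C i'') (Cod C d')" using p i'' by simp
  next
    fix w x assume w: "w \<in> Obj C" and x: "x \<in> H w (Dom C d')" and xz: "d' \<cdot> x = Z w (Cod C d')"
    have xm: "x \<in> Mor C" "Cod C x = Dom C d'" "Dom C x = w" using x unfolding hom_def by auto
    have "d \<cdot> (f' \<cdot> x) = (d \<cdot> f') \<cdot> x" using assocM p xm by metis
    also have "\<dots> = f \<cdot> (d' \<cdot> x)" using assocM p xm by metis
    also have "\<dots> = Z w (Cod C d)" using xz p w by simp
    finally have e: "d \<cdot> (f' \<cdot> x) = Z (Dom C (f' \<cdot> x)) (Cod C d)" using p xm by simp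
    obtain v where v: "v \<in> Mor C" "Cod C v = Dom C i" "Dom C v = w" "i \<cdot> v = f' \<cdot> x"
      using ker_fact[OF kk _ _ e] p xm by auto
    have "i'' \<cdot> v = x"
    proof (rule pb_uniq[OF pb])
      show "i'' \<cdot> v \<in> Mor C" "x \<in> Mor C" "Cod C (i'' \<cdot> v) = Dom C d'" "Cod C x = Dom C d'"
        "Dom C (i'' \<cdot> v) = Dom C x" using v i'' xm by auto
      have "d' \<cdot> (i'' \<cdot> v) = (d' \<cdot> i'') \<cdot> v" using assocM v i'' p by metis
      also have "\<dots> = Z w (Dom C f)" using v i'' p by simp
      finally show "d' \<cdot> (i'' \<cdot> v) = d' \<cdot> x" using xz p by simp
      have "f' \<cdot> (i'' \<cdot> v) = (f' \<cdot> i'') \<cdot> v" using assocM v i'' p by metis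
      thus "f' \<cdot> (i'' \<cdot> v) = f' \<cdot> x" using v i'' by simp
    qed
    hence ex: "v \<in> H w (Dom C i'') \<and> i'' \<cdot> v = x" using v i'' unfolding hom_def by auto
    show "\<exists>!g. g \<in> H w (Dom C i'') \<and> i'' \<cdot> g = x"
    proof (rule ex1I[of _ v])
      show "v \<in> H w (Dom C i'') \<and> i'' \<cdot> v = x" by (rule ex)
    next
      fix g assume g: "g \<in> H w (Dom C i'') \<and> i'' \<cdot> g = x"
      have gm: "g \<in> Mor C" "Cod C g = Dom C i" "Dom C g = w" using g i'' unfolding hom_def by auto
      have "i \<cdot> g = f' \<cdot> (i'' \<cdot> g)" using assocM gm i'' p by metis
      also have "\<dots> = f' \<cdot> (i'' \<cdot> v)" using g ex by simp
      also have "\<dots> = i \<cdot> v" using assocM v i'' p by metis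
      finally show "g = v" using ker_mono[OF kk gm(1) v(1)] gm v by auto
    qed
  qed
  thus ?thesis using i'' by blast
qed


lemma iso_intro: "f \<in> Mor C \<Longrightarrow> g \<in> Mor C \<Longrightarrow> Dom C g = Cod C f \<Longrightarrow> Cod C g = Dom C f \<Longrightarrow>
   g \<cdot> f = I (Dom C f) \<Longrightarrow> f \<cdot> g = I (Cod C f) \<Longrightarrow> iso C f"
  unfolding iso_def hom_def by auto

lemma iso_id: "a \<in> Obj C \<Longrightarrow> iso C (I a)"
  by (rule iso_intro[of _ "I a"]) auto

end

locale ex = pa +
  fixes E
  assumes ex: "exact_category C E"
begin

lemma conf: assumes "(i, d) \<in> E" shows "is_kernel C i d" "is_cokernel C d i"
  using assms ex unfolding exact_category_def kc_pair_def by auto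

lemma conf_mor: assumes "(i, d) \<in> E" shows "i \<in> Mor C" "d \<in> Mor C" "Cod C i = Dom C d"
    "d \<cdot> i = Z (Dom C i) (Cod C d)"
  using kerD[OF conf(1)[OF assms]] by auto

lemma iso_closed: assumes "(i, d) \<in> E" "i' \<in> Mor C" "d' \<in> Mor C" "Cod C i' = Dom C d'"
  "iso C f" "iso C g" "iso C h" "f \<in> H (Dom C i) (Dom C i')" "g \<in> H (Cod C i) (Cod C i')"
  "h \<in> H (Cod C d) (Cod C d')" "i' \<cdot> f = g \<cdot> i" "d' \<cdot> g = h \<cdot> d"
  shows "(i', d') \<in> E"
proof -
  have "\<forall>(i, d)\<in>E. \<forall>i' d' f g h.
        i' \<in> Mor C \<and> d' \<in> Mor C \<and> Cod C i' = Dom C d' \<and>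
        iso C f \<and> iso C g \<and> iso C h \<and>
        f \<in> hom C (Dom C i) (Dom C i') \<and> g \<in> hom C (Cod C i) (Cod C i') \<and>
        h \<in> hom C (Cod C d) (Cod C d') \<and>
        Comp C i' f = Comp C g i \<and> Comp C d' g = Comp C h d \<longrightarrow> (i', d') \<in> E"
    using ex unfolding exact_category_def by (elim conjE)
  note all = this
  have X: "\<forall>i' d' f g h.
        i' \<in> Mor C \<and> d' \<in> Mor C \<and> Cod C i' = Dom C d' \<and>
        iso C f \<and> iso C g \<and> iso C h \<and>
        f \<in> hom C (Dom C i) (Dom C i') \<and> g \<in> hom C (Cod C i) (Cod C i') \<and>
        h \<in> hom C (Cod C d) (Cod C d') \<and>
        Comp C i' f = Comp C g i \<and> Comp C d' g = Comp C h d \<longrightarrow> (i', d') \<in> E"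
    using bspec[OF all assms(1)] by simp
  show ?thesis by (rule X[rule_format]) (use assms in blast)
qed

lemma E0: "a \<in> Obj C \<Longrightarrow> \<exists>i. (i, I a) \<in> E"
  using ex unfolding exact_category_def deflation_def by blast
lemma E0op: "a \<in> Obj C \<Longrightarrow> \<exists>d. (I a, d) \<in> E"
  using ex unfolding exact_category_def inflation_def by blast
lemma E1: "(i, d) \<in> E \<Longrightarrow> (i', d') \<in> E \<Longrightarrow> Cod C d = Dom C d' \<Longrightarrow> \<exists>j. (j, d' \<cdot> d) \<in> E"
proof -
  have "\<forall>d d'. deflation C E d \<and> deflation C E d' \<and> Cod C d = Dom C d' \<longrightarrow> deflation C E (d' \<cdot> d)"
    using ex unfolding exact_category_def by (elim conjE)
  thus "(i, d) \<in> E \<Longrightarrow> (i', d') \<in> E \<Longrightarrow> Cod C d = Dom C d' \<Longrightarrow> \<exists>j. (j, d' \<cdot> d) \<in> E"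
    unfolding deflation_def by blast
qed
lemma E1op: "(i, d) \<in> E \<Longrightarrow> (i', d') \<in> E \<Longrightarrow> Cod C i = Dom C i' \<Longrightarrow> \<exists>e. (i' \<cdot> i, e) \<in> E"
proof -
  have "\<forall>i i'. inflation C E i \<and> inflation C E i' \<and> Cod C i = Dom C i' \<longrightarrow> inflation C E (i' \<cdot> i)"
    using ex unfolding exact_category_def by (elim conjE)
  thus "(i, d) \<in> E \<Longrightarrow> (i', d') \<in> E \<Longrightarrow> Cod C i = Dom C i' \<Longrightarrow> \<exists>e. (i' \<cdot> i, e) \<in> E"
    unfolding inflation_def by blast
qed
lemma E2: "(i, d) \<in> E \<Longrightarrow> f \<in> Mor C \<Longrightarrow> Dom C f = Dom C i \<Longrightarrow>
   \<exists>i' f' e. is_pushout C i f i' f' \<and> (i', e) \<in> E"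
proof -
  have "\<forall>i f. inflation C E i \<and> f \<in> Mor C \<and> Dom C f = Dom C i \<longrightarrow>
        (\<exists>i' f'. is_pushout C i f i' f' \<and> inflation C E i')"
    using ex unfolding exact_category_def by (elim conjE)
  thus "(i, d) \<in> E \<Longrightarrow> f \<in> Mor C \<Longrightarrow> Dom C f = Dom C i \<Longrightarrow>
   \<exists>i' f' e. is_pushout C i f i' f' \<and> (i', e) \<in> E"
    unfolding inflation_def by blast
qed
lemma E2op: "(i, d) \<in> E \<Longrightarrow> f \<in> Mor C \<Longrightarrow> Cod C f = Cod C d \<Longrightarrow>
   \<exists>d' f' j. is_pullback C d f d' f' \<and> (j, d') \<in> E"
proof -
  have "\<forall>d f. deflation C E d \<and> f \<in> Mor C \<and> Cod C f = Cod C d \<longrightarrow>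
        (\<exists>d' f'. is_pullback C d f d' f' \<and> deflation C E d')"
    using ex unfolding exact_category_def by (elim conjE)
  thus "(i, d) \<in> E \<Longrightarrow> f \<in> Mor C \<Longrightarrow> Cod C f = Cod C d \<Longrightarrow>
   \<exists>d' f' j. is_pullback C d f d' f' \<and> (j, d') \<in> E"
    unfolding deflation_def by blast
qed

lemma cok_replace: assumes cf: "(i, d) \<in> E" and ck: "is_cokernel C d' i" shows "(i, d') \<in> E"
proof -
  have c: "i \<in> Mor C" "d \<in> Mor C" "Cod C i = Dom C d" "d \<cdot> i = Z (Dom C i) (Cod C d)" using conf_mor[OF cf] by auto
  have c': "d' \<in> Mor C" "Cod C i = Dom C d'" "d' \<cdot> i = Z (Dom C i) (Cod C d')" using cokD[OF ck] by auto
  have ck0: "is_cokernel C d i" using conf[OF cf] by auto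
  obtain h where h: "h \<in> Mor C" "Dom C h = Cod C d" "Cod C h = Cod C d'" "h \<cdot> d = d'"
    using cok_fact[OF ck0 c'(1)] c' by auto
  obtain h' where h': "h' \<in> Mor C" "Dom C h' = Cod C d'" "Cod C h' = Cod C d" "h' \<cdot> d' = d"
    using cok_fact[OF ck c(2)] c by auto
  have "(h' \<cdot> h) \<cdot> d = I (Cod C d) \<cdot> d" using assocM h h' c by simp
  hence 1: "h' \<cdot> h = I (Cod C d)" using cok_epi[OF ck0, of "h' \<cdot> h" "I (Cod C d)"] h h' c by simp
  have "(h \<cdot> h') \<cdot> d' = I (Cod C d') \<cdot> d'" using assocM h h' c' by simp
  hence 2: "h \<cdot> h' = I (Cod C d')" using cok_epi[OF ck, of "h \<cdot> h'" "I (Cod C d')"] h h' c' by simp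
  have "iso C h" using iso_intro[OF h(1) h'(1)] h h' 1 2 by simp
  have o: "Dom C i \<in> Obj C" "Cod C i \<in> Obj C" using c by auto
  have hh: "h \<in> H (Cod C d) (Cod C d')" using h unfolding hom_def by auto
  have e1: "i \<cdot> I (Dom C i) = I (Cod C i) \<cdot> i" using c by simp
  have e2: "d' \<cdot> I (Cod C i) = h \<cdot> d" using c' h by simp
  show ?thesis
    using iso_closed[OF cf c(1) c'(1) c'(2) iso_id[OF o(1)] iso_id[OF o(2)] \<open>iso C h\<close> id_hom[OF o(1)] id_hom[OF o(2)] hh e1 e2] .
qed

lemma ker_replace: assumes cf: "(i, d) \<in> E" and kk: "is_kernel C i' d" shows "(i', d) \<in> E"
proof -
  have c: "i \<in> Mor C" "d \<in> Mor C" "Cod C i = Dom C d" "d \<cdot> i = Z (Dom C i) (Cod C d)" using conf_mor[OF cf] by auto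
  have c': "i' \<in> Mor C" "Cod C i' = Dom C d" "d \<cdot> i' = Z (Dom C i') (Cod C d)" using kerD[OF kk] by auto
  have kk0: "is_kernel C i d" using conf[OF cf] by auto
  obtain h where h: "h \<in> Mor C" "Dom C h = Dom C i'" "Cod C h = Dom C i" "i \<cdot> h = i'"
    using ker_fact[OF kk0 c'(1)] c' by auto
  obtain h' where h': "h' \<in> Mor C" "Dom C h' = Dom C i" "Cod C h' = Dom C i'" "i' \<cdot> h' = i"
    using ker_fact[OF kk c(1)] c by auto
  have "i \<cdot> (h \<cdot> h') = i \<cdot> I (Dom C i)" using assocM h h' c by (metis idrM)
  hence 1: "h \<cdot> h' = I (Dom C i)" using ker_mono[OF kk0, of "h \<cdot> h'" "I (Dom C i)"] h h' c by simp
  have "i' \<cdot> (h' \<cdot> h) = i' \<cdot> I (Dom C i')" using assocM h h' c' by (metis idrM)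
  hence 2: "h' \<cdot> h = I (Dom C i')" using ker_mono[OF kk, of "h' \<cdot> h" "I (Dom C i')"] h h' c' by simp
  have "iso C h'" using iso_intro[OF h'(1) h(1)] h h' 1 2 by simp
  have o: "Cod C d \<in> Obj C" "Cod C i \<in> Obj C" using c by auto
  have hh: "h' \<in> H (Dom C i) (Dom C i')" using h' unfolding hom_def by auto
  have e1: "i' \<cdot> h' = I (Cod C i) \<cdot> i" using c h' by simp
  have e2: "d \<cdot> I (Cod C i) = I (Cod C d) \<cdot> d" using c by simp
  show ?thesis
    using iso_closed[OF cf c'(1) c(2) c'(2) \<open>iso C h'\<close> iso_id[OF o(2)] iso_id[OF o(1)] hh _ _ e1] c c' id_hom[OF o(2)] id_hom[OF o(1)] e2
    by metis
qed


lemma five: assumes ab: "(a, b) \<in> E" and ce: "(c, e) \<in> E" and u: "u \<in> Mor C" "Dom C u = Cod C a" "Cod C u = Cod C c"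
  and uac: "u \<cdot> a = c" and eub: "e \<cdot> u = b"
  shows "\<exists>v. v \<in> Mor C \<and> Dom C v = Cod C c \<and> Cod C v = Cod C a \<and> v \<cdot> u = I (Cod C a) \<and> u \<cdot> v = I (Cod C c)"
proof -
  have A: "a \<in> Mor C" "b \<in> Mor C" "Cod C a = Dom C b" "b \<cdot> a = Z (Dom C a) (Cod C b)" using conf_mor[OF ab] by auto
  have B: "c \<in> Mor C" "e \<in> Mor C" "Cod C c = Dom C e" "e \<cdot> c = Z (Dom C c) (Cod C e)" using conf_mor[OF ce] by auto
  have kab: "is_kernel C a b" and kce: "is_kernel C c e" using conf ab ce by auto
  have dc: "Dom C c = Dom C a" using uac u A by (metis dom_comp)
  have ce': "Cod C e = Cod C b" using eub u B by (metis cod_comp)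
  obtain q1 q2 j where pb: "is_pullback C b e q1 q2" and qj: "(j, q1) \<in> E"
    using E2op[OF ab B(2) ce'] by blast
  have P: "q1 \<in> Mor C" "q2 \<in> Mor C" "Cod C q1 = Dom C e" "Cod C q2 = Dom C b" "Dom C q1 = Dom C q2"
    "b \<cdot> q2 = e \<cdot> q1" using pbD[OF pb] by auto
  note S = A B P u dc ce'
  have "e \<cdot> u = b \<cdot> I (Dom C b)" using eub A by simp
  then obtain t where t: "t \<in> Mor C" "Dom C t = Dom C b" "Cod C t = Dom C q1" "q1 \<cdot> t = u" "q2 \<cdot> t = I (Dom C b)"
    using pb_ex[OF pb u(1) id_mor[of "Dom C b"]] S by auto
  have "e \<cdot> c = b \<cdot> Z (Dom C a) (Dom C b)" using S by simp
  then obtain k2 where k2: "k2 \<in> Mor C" "Dom C k2 = Dom C a" "Cod C k2 = Dom C q1" "q1 \<cdot> k2 = c"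
      "q2 \<cdot> k2 = Z (Dom C a) (Dom C b)"
    using pb_ex[OF pb B(1) zero_mor[of "Dom C a" "Dom C b"]] S by auto
  have "e \<cdot> Z (Dom C a) (Dom C e) = b \<cdot> a" using S by simp
  then obtain k where k: "k \<in> Mor C" "Dom C k = Dom C a" "Cod C k = Dom C q1" "q1 \<cdot> k = Z (Dom C a) (Dom C e)"
      "q2 \<cdot> k = a"
    using pb_ex[OF pb zero_mor[of "Dom C a" "Dom C e"] A(1)] S by auto
  note S = S t k2 k
  define n where "n = neg (t \<cdot> q2)"
  define m where "m = I (Dom C q1) \<oplus> n"
  have N: "n \<in> Mor C" "Dom C n = Dom C q1" "Cod C n = Dom C q1" using S unfolding n_def by auto
  have M: "m \<in> Mor C" "Dom C m = Dom C q1" "Cod C m = Dom C q1" using S N unfolding m_def by auto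
  note S = S N M
  have q2t: "q2 \<cdot> (t \<cdot> q2) = q2" using assocM[of q2 t q2] S by simp
  have q2m: "q2 \<cdot> m = Z (Dom C q1) (Dom C b)"
  proof -
    have "q2 \<cdot> m = q2 \<cdot> I (Dom C q1) \<oplus> q2 \<cdot> n" unfolding m_def using distrM[of "I (Dom C q1)" n q2] S by simp
    also have "\<dots> = q2 \<oplus> neg q2" unfolding n_def using S q2t by simp
    finally show ?thesis using S by simp
  qed
  have "e \<cdot> (q1 \<cdot> m) = Z (Dom C q1) (Cod C e)"
  proof -
    have "e \<cdot> (q1 \<cdot> m) = (e \<cdot> q1) \<cdot> m" using assocM[of m q1 e] S by simp
    also have "\<dots> = (b \<cdot> q2) \<cdot> m" using S by simp
    also have "\<dots> = b \<cdot> (q2 \<cdot> m)" using assocM[of m q2 b] S by simp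
    finally show ?thesis using q2m S by simp
  qed
  then obtain y where y: "y \<in> Mor C" "Dom C y = Dom C q1" "Cod C y = Dom C a" "c \<cdot> y = q1 \<cdot> m"
    using ker_fact[OF kce, of "q1 \<cdot> m"] S by auto
  have k2y: "k2 \<cdot> y = m"
  proof (rule pb_uniq[OF pb])
    show "k2 \<cdot> y \<in> Mor C" "m \<in> Mor C" "Cod C (k2 \<cdot> y) = Dom C q1" "Cod C m = Dom C q1" "Dom C (k2 \<cdot> y) = Dom C m"
      using S y by auto
    show "q1 \<cdot> (k2 \<cdot> y) = q1 \<cdot> m" using assocM[of y k2 q1] S y by simp
    show "q2 \<cdot> (k2 \<cdot> y) = q2 \<cdot> m" using assocM[of y k2 q2] S y q2m by simp
  qed
  have k2mono: "\<And>x x'. x \<in> Mor C \<Longrightarrow> x' \<in> Mor C \<Longrightarrow> Dom C x = Dom C x' \<Longrightarrow> Cod C x = Dom C a \<Longrightarrow>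
     Cod C x' = Dom C a \<Longrightarrow> k2 \<cdot> x = k2 \<cdot> x' \<Longrightarrow> x = x'"
  proof -
    fix x x' assume h: "x \<in> Mor C" "x' \<in> Mor C" "Dom C x = Dom C x'" "Cod C x = Dom C a"
     "Cod C x' = Dom C a" "k2 \<cdot> x = k2 \<cdot> x'"
    have "c \<cdot> x = q1 \<cdot> (k2 \<cdot> x)" using assocM[of x k2 q1] S h by simp
    also have "\<dots> = c \<cdot> x'" using assocM[of x' k2 q1] S h by simp
    finally show "x = x'" using ker_mono[OF kce h(1,2,3)] h S by simp
  qed
  have yk: "y \<cdot> k = neg (I (Dom C a))"
  proof -
    have "c \<cdot> (y \<cdot> k) = (q1 \<cdot> m) \<cdot> k" using assocM[of k y c] S y by simp
    also have "\<dots> = q1 \<cdot> (m \<cdot> k)" using assocM[of k m q1] S by simp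
    also have "m \<cdot> k = k \<oplus> n \<cdot> k" unfolding m_def using distlM[of k "I (Dom C q1)" n] S by simp
    also have "n \<cdot> k = neg (t \<cdot> a)" unfolding n_def using S assocM[of k q2 t] by simp
    also have "q1 \<cdot> (k \<oplus> neg (t \<cdot> a)) = q1 \<cdot> k \<oplus> q1 \<cdot> neg (t \<cdot> a)"
      using distrM[of k "neg (t \<cdot> a)" q1] S by simp
    also have "q1 \<cdot> neg (t \<cdot> a) = neg c" using S assocM[of a t q1] uac by simp
    also have "q1 \<cdot> k \<oplus> neg c = neg c" using S by simp
    also have "neg c = c \<cdot> neg (I (Dom C a))" using S by simp
    finally have "c \<cdot> (y \<cdot> k) = c \<cdot> neg (I (Dom C a))" .
    thus ?thesis using ker_mono[OF kce, of "y \<cdot> k" "neg (I (Dom C a))"] S y by simp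
  qed
  have yt: "y \<cdot> t = Z (Dom C b) (Dom C a)"
  proof (rule k2mono)
    show "y \<cdot> t \<in> Mor C" "Z (Dom C b) (Dom C a) \<in> Mor C" "Dom C (y \<cdot> t) = Dom C (Z (Dom C b) (Dom C a))"
      "Cod C (y \<cdot> t) = Dom C a" "Cod C (Z (Dom C b) (Dom C a)) = Dom C a" using S y by auto
    have "k2 \<cdot> (y \<cdot> t) = m \<cdot> t" using assocM[of t y k2] S y k2y by simp
    also have "\<dots> = t \<oplus> n \<cdot> t" unfolding m_def using distlM[of t "I (Dom C q1)" n] S by simp
    also have "n \<cdot> t = neg t" unfolding n_def using S assocM[of t q2 t] by simp
    finally show "k2 \<cdot> (y \<cdot> t) = k2 \<cdot> Z (Dom C b) (Dom C a)" using S by simp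
  qed
  define w where "w = q2 \<oplus> a \<cdot> y"
  have W: "w \<in> Mor C" "Dom C w = Dom C q1" "Cod C w = Dom C b" unfolding w_def using S y by auto
  have wk: "w \<cdot> k = Z (Dom C a) (Dom C b)"
  proof -
    have "w \<cdot> k = q2 \<cdot> k \<oplus> (a \<cdot> y) \<cdot> k" unfolding w_def by (rule distlM) (use S y in simp_all)
    also have "(a \<cdot> y) \<cdot> k = a \<cdot> neg (I (Dom C a))" using assocM[of k y a] S y yk by simp
    finally show ?thesis using S by simp
  qed
  have jq: "j \<in> Mor C" "Cod C j = Dom C q1" "q1 \<cdot> j = Z (Dom C j) (Cod C q1)" using conf_mor[OF qj] by auto
  have ckq: "is_cokernel C q1 j" using conf[OF qj] by auto
  have "b \<cdot> (q2 \<cdot> j) = Z (Dom C j) (Cod C b)"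
  proof -
    have "b \<cdot> (q2 \<cdot> j) = (b \<cdot> q2) \<cdot> j" using assocM[of j q2 b] S jq by simp
    also have "\<dots> = e \<cdot> (q1 \<cdot> j)" using assocM[of j q1 e] S jq by simp
    finally show ?thesis using S jq by simp
  qed
  then obtain phi where phi: "phi \<in> Mor C" "Dom C phi = Dom C j" "Cod C phi = Dom C a" "a \<cdot> phi = q2 \<cdot> j"
    using ker_fact[OF kab, of "q2 \<cdot> j"] S jq by auto
  have kphi: "k \<cdot> phi = j"
  proof (rule pb_uniq[OF pb])
    show "k \<cdot> phi \<in> Mor C" "j \<in> Mor C" "Cod C (k \<cdot> phi) = Dom C q1" "Cod C j = Dom C q1" "Dom C (k \<cdot> phi) = Dom C j"
      using S phi jq by auto
    show "q1 \<cdot> (k \<cdot> phi) = q1 \<cdot> j" using assocM[of phi k q1] S phi jq by simp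
    show "q2 \<cdot> (k \<cdot> phi) = q2 \<cdot> j" using assocM[of phi k q2] S phi by simp
  qed
  have "w \<cdot> j = Z (Dom C j) (Cod C w)"
  proof -
    have "w \<cdot> j = (w \<cdot> k) \<cdot> phi" using assocM[of phi k w] S phi W kphi by simp
    thus ?thesis using wk S phi W by simp
  qed
  then obtain v where v: "v \<in> Mor C" "Dom C v = Cod C q1" "Cod C v = Cod C w" "v \<cdot> q1 = w"
    using cok_fact[OF ckq W(1)] W jq by auto
  have vu: "v \<cdot> u = I (Cod C a)"
  proof -
    have "v \<cdot> u = (v \<cdot> q1) \<cdot> t" using assocM[of t q1 v] S v by simp
    also have "\<dots> = q2 \<cdot> t \<oplus> (a \<cdot> y) \<cdot> t" unfolding v(4) w_def by (rule distlM) (use S y in simp_all)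
    also have "(a \<cdot> y) \<cdot> t = Z (Dom C b) (Dom C b)" using assocM[of t y a] S y yt by simp
    finally show ?thesis using S by simp
  qed
  have uv: "u \<cdot> v = I (Cod C c)"
  proof (rule cok_epi[OF ckq])
    show "u \<cdot> v \<in> Mor C" "I (Cod C c) \<in> Mor C" "Cod C (u \<cdot> v) = Cod C (I (Cod C c))" "Dom C (u \<cdot> v) = Cod C q1"
      "Dom C (I (Cod C c)) = Cod C q1" using S v W by auto
    have cy: "c \<cdot> y = q1 \<oplus> neg (u \<cdot> q2)"
    proof -
      have "c \<cdot> y = q1 \<cdot> I (Dom C q1) \<oplus> q1 \<cdot> n" using y unfolding m_def using distrM[of "I (Dom C q1)" n q1] S by simp
      also have "q1 \<cdot> n = neg (u \<cdot> q2)" unfolding n_def using assocM[of q2 t q1] S by simp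
      finally show ?thesis using S by simp
    qed
    have "(u \<cdot> v) \<cdot> q1 = u \<cdot> w" using assocM[of q1 v u] S v W by simp
    also have "\<dots> = u \<cdot> q2 \<oplus> u \<cdot> (a \<cdot> y)" unfolding w_def by (rule distrM) (use S y in simp_all)
    also have "u \<cdot> (a \<cdot> y) = c \<cdot> y" using assocM[of y a u] S y uac by simp
    also have "u \<cdot> q2 \<oplus> c \<cdot> y = u \<cdot> q2 \<oplus> (neg (u \<cdot> q2) \<oplus> q1)" using cy add_commM[of q1 "neg (u \<cdot> q2)"] S by simp
    also have "\<dots> = (u \<cdot> q2 \<oplus> neg (u \<cdot> q2)) \<oplus> q1" using add_assocM[of "u \<cdot> q2" "neg (u \<cdot> q2)" q1] S by simp
    finally show "(u \<cdot> v) \<cdot> q1 = I (Cod C c) \<cdot> q1" using S by simp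
  qed
  show ?thesis using v vu uv W S by auto
qed


end

locale fctr = A: pa A + B: pa B for A :: "('o,'m) addcat" and B :: "('p,'n) addcat" +
  fixes LO :: "'o \<Rightarrow> 'p" and LM :: "'m \<Rightarrow> 'n"
  assumes af: "additive_functor A B LO LM"
begin

lemma F_obj[simp]: "a \<in> Obj A \<Longrightarrow> LO a \<in> Obj B" using af unfolding additive_functor_def by blast
lemma F_id[simp]: "a \<in> Obj A \<Longrightarrow> LM (Id A a) = Id B (LO a)" using af unfolding additive_functor_def by blast
lemma F_props: "f \<in> Mor A \<Longrightarrow> LM f \<in> Mor B \<and> Dom B (LM f) = LO (Dom A f) \<and> Cod B (LM f) = LO (Cod A f)"
  using af unfolding additive_functor_def hom_def by blast
lemma F_mor[simp]: "f \<in> Mor A \<Longrightarrow> LM f \<in> Mor B" using F_props by blast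
lemma F_dom[simp]: "f \<in> Mor A \<Longrightarrow> Dom B (LM f) = LO (Dom A f)" using F_props by blast
lemma F_cod[simp]: "f \<in> Mor A \<Longrightarrow> Cod B (LM f) = LO (Cod A f)" using F_props by blast
lemma F_comp: "f \<in> Mor A \<Longrightarrow> g \<in> Mor A \<Longrightarrow> Cod A f = Dom A g \<Longrightarrow> LM (Comp A g f) = Comp B (LM g) (LM f)"
  using af unfolding additive_functor_def by blast
lemma F_add: "f \<in> Mor A \<Longrightarrow> g \<in> Mor A \<Longrightarrow> Dom A f = Dom A g \<Longrightarrow> Cod A f = Cod A g \<Longrightarrow>
    LM (Add A f g) = Add B (LM f) (LM g)"
proof -
  assume h: "f \<in> Mor A" "g \<in> Mor A" "Dom A f = Dom A g" "Cod A f = Cod A g"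
  have "\<forall>a\<in>Obj A. \<forall>b\<in>Obj A. \<forall>f\<in>hom A a b. \<forall>g\<in>hom A a b. LM (Add A f g) = Add B (LM f) (LM g)"
    using af unfolding additive_functor_def by blast
  moreover have "f \<in> hom A (Dom A f) (Cod A f)" "g \<in> hom A (Dom A f) (Cod A f)" using h unfolding hom_def by auto
  ultimately show ?thesis using h A.obj_dom A.obj_cod by blast
qed

lemma F_zero[simp]: assumes "a \<in> Obj A" "b \<in> Obj A" shows "LM (Zero A a b) = Zero B (LO a) (LO b)"
proof -
  have z: "Zero A a b \<in> Mor A" "Dom A (Zero A a b) = a" "Cod A (Zero A a b) = b" using assms by auto
  have "Add B (LM (Zero A a b)) (LM (Zero A a b)) = LM (Zero A a b)"
    using F_add[OF z(1) z(1)] z by simp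
  moreover have "LM (Zero A a b) \<in> hom B (LO a) (LO b)" using z unfolding hom_def by auto
  ultimately show ?thesis using B.zero_unique by blast
qed

lemma F_iso: assumes "iso A f" shows "iso B (LM f)"
proof -
  obtain g where g: "g \<in> hom A (Cod A f) (Dom A f)" "Comp A g f = Id A (Dom A f)" "Comp A f g = Id A (Cod A f)"
    "f \<in> Mor A" using assms unfolding iso_def by blast
  have gm: "g \<in> Mor A" "Dom A g = Cod A f" "Cod A g = Dom A f" using g unfolding hom_def by auto
  show ?thesis
  proof (rule B.iso_intro[of _ "LM g"])
    show "LM f \<in> Mor B" "LM g \<in> Mor B" "Dom B (LM g) = Cod B (LM f)" "Cod B (LM g) = Dom B (LM f)"
      using g gm by auto
    show "Comp B (LM g) (LM f) = Id B (Dom B (LM f))" using F_comp[of f g] g gm by simp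
    show "Comp B (LM f) (LM g) = Id B (Cod B (LM f))" using F_comp[of g f] g gm by simp
  qed
qed

end

locale setting = fctr A B LO LM + AE: ex A E + BF: ex B F + BG: ex B G
  for A :: "('o,'m) addcat" and E and B :: "('p,'n) addcat" and F G and LO LM +
  assumes exE: "\<forall>(i, d)\<in>E. (LM i, LM d) \<in> F" and sub: "G \<subseteq> F"
begin

lemma LE: "(i, d) \<in> E \<Longrightarrow> (LM i, LM d) \<in> F" using exE by blast

lemma keep_ker: "(j, e) \<in> F \<Longrightarrow> (j', e) \<in> G \<Longrightarrow> (j, e) \<in> G"
  using BG.ker_replace BF.conf(1) by blast
lemma keep_cok: "(j, e) \<in> F \<Longrightarrow> (j, e') \<in> G \<Longrightarrow> (j, e) \<in> G"
  using BG.cok_replace BF.conf(2) by blast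

definition "E' = {(i, d) \<in> E. (LM i, LM d) \<in> G}"

lemma memE': "(i, d) \<in> E' \<longleftrightarrow> (i, d) \<in> E \<and> (LM i, LM d) \<in> G" unfolding E'_def by auto

lemma g1: "additive A" using AE.ex unfolding exact_category_def by blast

lemma g2: "\<forall>(i, d)\<in>E'. kc_pair A i d" using AE.conf unfolding E'_def kc_pair_def by auto

lemma iso3: assumes id: "(i, d) \<in> E'" and h: "i' \<in> Mor A" "d' \<in> Mor A" "Cod A i' = Dom A d'"
  "iso A f" "iso A g" "iso A h" "f \<in> hom A (Dom A i) (Dom A i')" "g \<in> hom A (Cod A i) (Cod A i')"
  "h \<in> hom A (Cod A d) (Cod A d')" "Comp A i' f = Comp A g i" "Comp A d' g = Comp A h d"
  shows "(i', d') \<in> E'"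
proof -
  have e: "(i, d) \<in> E" "(LM i, LM d) \<in> G" using id memE' by auto
  have m: "i \<in> Mor A" "d \<in> Mor A" "Cod A i = Dom A d" using AE.conf_mor[OF e(1)] by auto
  have fm: "f \<in> Mor A" "Dom A f = Dom A i" "Cod A f = Dom A i'" using h unfolding hom_def by auto
  have gm: "g \<in> Mor A" "Dom A g = Cod A i" "Cod A g = Cod A i'" using h unfolding hom_def by auto
  have hm: "h \<in> Mor A" "Dom A h = Cod A d" "Cod A h = Cod A d'" using h unfolding hom_def by auto
  have 1: "(i', d') \<in> E" using AE.iso_closed[OF e(1) h] .
  have c1: "Comp B (LM i') (LM f) = Comp B (LM g) (LM i)" using F_comp[of f i'] F_comp[of i g] h fm gm m by simp
  have c2: "Comp B (LM d') (LM g) = Comp B (LM h) (LM d)" using F_comp[of g d'] F_comp[of d h] h hm gm m by simp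
  have 2: "(LM i', LM d') \<in> G"
  proof (rule BG.iso_closed[OF e(2) _ _ _ F_iso F_iso F_iso _ _ _ c1 c2])
    show "LM i' \<in> Mor B" "LM d' \<in> Mor B" "Cod B (LM i') = Dom B (LM d')" using h by auto
    show "iso A f" "iso A g" "iso A h" using h by auto
    show "LM f \<in> hom B (Dom B (LM i)) (Dom B (LM i'))" "LM g \<in> hom B (Cod B (LM i)) (Cod B (LM i'))"
      "LM h \<in> hom B (Cod B (LM d)) (Cod B (LM d'))" using fm gm hm h m unfolding hom_def by auto
  qed
  show ?thesis using 1 2 memE' by auto
qed

lemma g4: "a \<in> Obj A \<Longrightarrow> deflation A E' (Id A a)"
proof -
  assume a: "a \<in> Obj A"
  obtain i where i: "(i, Id A a) \<in> E" using AE.E0[OF a] by blast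
  obtain j where j: "(j, Id B (LO a)) \<in> G" using BG.E0[of "LO a"] a by auto
  have "(LM i, Id B (LO a)) \<in> F" using LE[OF i] a by simp
  hence "(LM i, Id B (LO a)) \<in> G" using keep_ker j by blast
  thus ?thesis using i a unfolding deflation_def memE' by auto
qed

lemma g5: "a \<in> Obj A \<Longrightarrow> inflation A E' (Id A a)"
proof -
  assume a: "a \<in> Obj A"
  obtain d where i: "(Id A a, d) \<in> E" using AE.E0op[OF a] by blast
  obtain j where j: "(Id B (LO a), j) \<in> G" using BG.E0op[of "LO a"] a by auto
  have "(Id B (LO a), LM d) \<in> F" using LE[OF i] a by simp
  hence "(Id B (LO a), LM d) \<in> G" using keep_cok j by blast
  thus ?thesis using i a unfolding inflation_def memE' by auto
qed

lemma g6: "deflation A E' d \<Longrightarrow> deflation A E' d' \<Longrightarrow> Cod A d = Dom A d' \<Longrightarrow> deflation A E' (Comp A d' d)"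
proof -
  assume "deflation A E' d" "deflation A E' d'" and c: "Cod A d = Dom A d'"
  then obtain i i' where i: "(i, d) \<in> E" "(LM i, LM d) \<in> G" and i': "(i', d') \<in> E" "(LM i', LM d') \<in> G"
    unfolding deflation_def memE' by auto
  have m: "d \<in> Mor A" "d' \<in> Mor A" using AE.conf_mor i(1) i'(1) by auto
  obtain j where j: "(j, Comp A d' d) \<in> E" using AE.E1[OF i(1) i'(1) c] by blast
  obtain j' where j': "(j', Comp B (LM d') (LM d)) \<in> G" using BG.E1[OF i(2) i'(2)] m c by auto
  have "(LM j, LM (Comp A d' d)) \<in> F" using LE[OF j] .
  moreover have "LM (Comp A d' d) = Comp B (LM d') (LM d)" using F_comp m c by blast
  ultimately have "(LM j, LM (Comp A d' d)) \<in> G" using keep_ker j' by metis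
  thus ?thesis using j unfolding deflation_def memE' by auto
qed

lemma g7: "inflation A E' i \<Longrightarrow> inflation A E' i' \<Longrightarrow> Cod A i = Dom A i' \<Longrightarrow> inflation A E' (Comp A i' i)"
proof -
  assume "inflation A E' i" "inflation A E' i'" and c: "Cod A i = Dom A i'"
  then obtain d d' where i: "(i, d) \<in> E" "(LM i, LM d) \<in> G" and i': "(i', d') \<in> E" "(LM i', LM d') \<in> G"
    unfolding inflation_def memE' by auto
  have m: "i \<in> Mor A" "i' \<in> Mor A" using AE.conf_mor i(1) i'(1) by auto
  obtain j where j: "(Comp A i' i, j) \<in> E" using AE.E1op[OF i(1) i'(1) c] by blast
  obtain j' where j': "(Comp B (LM i') (LM i), j') \<in> G" using BG.E1op[OF i(2) i'(2)] m c by auto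
  have "(LM (Comp A i' i), LM j) \<in> F" using LE[OF j] .
  moreover have "LM (Comp A i' i) = Comp B (LM i') (LM i)" using F_comp m c by blast
  ultimately have "(LM (Comp A i' i), LM j) \<in> G" using keep_cok j' by metis
  thus ?thesis using j unfolding inflation_def memE' by auto
qed


lemma g8: assumes inf: "inflation A E' i" and f: "f \<in> Mor A" "Dom A f = Dom A i"
  shows "\<exists>i' f'. is_pushout A i f i' f' \<and> inflation A E' i'"
proof -
  obtain d where e: "(i, d) \<in> E" "(LM i, LM d) \<in> G" using inf unfolding inflation_def memE' by auto
  have mi: "i \<in> Mor A" "d \<in> Mor A" "Cod A i = Dom A d" using AE.conf_mor[OF e(1)] by auto
  have ckd: "is_cokernel A d i" using AE.conf(2)[OF e(1)] .
  obtain i' f' e0 where po: "is_pushout A i f i' f'" and e0: "(i', e0) \<in> E" using AE.E2[OF e(1) f] by blast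
  have P: "i' \<in> Mor A" "f' \<in> Mor A" "Dom A i' = Cod A f" "Dom A f' = Cod A i" "Cod A i' = Cod A f'"
    "Comp A i' f = Comp A f' i" using A.poD[OF po] by auto
  obtain d'' where d'': "d'' \<in> Mor A" "Dom A d'' = Cod A i'" "Cod A d'' = Cod A d" "Comp A d'' f' = d"
    "is_cokernel A d'' i'" using A.po_cok[OF po ckd] by blast
  have d''z: "Comp A d'' i' = Zero A (Dom A i') (Cod A d'')" using A.cokD[OF d''(5)] by auto
  have E1: "(i', d'') \<in> E" using AE.cok_replace[OF e0 d''(5)] .
  have LF: "LM f \<in> Mor B" "Dom B (LM f) = Dom B (LM i)" using f mi by auto
  obtain \<iota> g2 e2 where poB: "is_pushout B (LM i) (LM f) \<iota> g2" and e2: "(\<iota>, e2) \<in> G"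
    using BG.E2[OF e(2) LF] by blast
  have PB: "\<iota> \<in> Mor B" "g2 \<in> Mor B" "Dom B \<iota> = Cod B (LM f)" "Dom B g2 = Cod B (LM i)" "Cod B \<iota> = Cod B g2"
    using B.poD[OF poB] by auto
  have ckB: "is_cokernel B (LM d) (LM i)" using BG.conf(2)[OF e(2)] .
  obtain \<delta> where dl: "\<delta> \<in> Mor B" "Dom B \<delta> = Cod B \<iota>" "Cod B \<delta> = Cod B (LM d)" "Comp B \<delta> g2 = LM d"
    "is_cokernel B \<delta> \<iota>" using B.po_cok[OF poB ckB] by blast
  have dlz: "Comp B \<delta> \<iota> = Zero B (Dom B \<iota>) (Cod B \<delta>)" using B.cokD[OF dl(5)] by auto
  have E2': "(\<iota>, \<delta>) \<in> G" using BG.cok_replace[OF e2 dl(5)] .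
  have comm: "Comp B (LM i') (LM f) = Comp B (LM f') (LM i)"
    using F_comp[of f i'] F_comp[of i f'] P f mi by simp
  obtain u where u: "u \<in> Mor B" "Dom B u = Cod B \<iota>" "Cod B u = Cod B (LM i')" "Comp B u \<iota> = LM i'"
      "Comp B u g2 = LM f'"
    using B.po_ex[OF poB, of "LM i'" "LM f'"] P f mi comm by auto
  have key: "Comp B (LM d'') u = \<delta>"
  proof (rule B.po_uniq[OF poB])
    show "Comp B (LM d'') u \<in> Mor B" "\<delta> \<in> Mor B" "Dom B (Comp B (LM d'') u) = Cod B \<iota>" "Dom B \<delta> = Cod B \<iota>"
      "Cod B (Comp B (LM d'') u) = Cod B \<delta>" using u d'' dl P mi by auto
    have "Comp B (Comp B (LM d'') u) \<iota> = Comp B (LM d'') (Comp B u \<iota>)"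
      using B.assocM[of \<iota> u "LM d''"] u d'' PB P by simp
    also have "\<dots> = LM (Comp A d'' i')" using u F_comp[of i' d''] P d'' by simp
    also have "\<dots> = Comp B \<delta> \<iota>" using d''z dlz PB P d'' f mi dl by simp
    finally show "Comp B (Comp B (LM d'') u) \<iota> = Comp B \<delta> \<iota>" .
    have "Comp B (Comp B (LM d'') u) g2 = Comp B (LM d'') (Comp B u g2)"
      using B.assocM[of g2 u "LM d''"] u d'' PB P by simp
    also have "\<dots> = LM (Comp A d'' f')" using u F_comp[of f' d''] P d'' by simp
    finally show "Comp B (Comp B (LM d'') u) g2 = Comp B \<delta> g2" using d'' dl by simp
  qed
  obtain v where v: "v \<in> Mor B" "Dom B v = Cod B (LM i')" "Cod B v = Cod B \<iota>"
      "Comp B v u = Id B (Cod B \<iota>)" "Comp B u v = Id B (Cod B (LM i'))"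
    using BF.five[OF _ LE[OF E1] u(1,2,3,4) key] E2' sub by blast
  have isou: "iso B u" using B.iso_intro[OF u(1) v(1)] u v by simp
  have o: "Dom B \<iota> \<in> Obj B" "Cod B \<delta> \<in> Obj B" using PB dl f mi by auto
  have "(LM i', LM d'') \<in> G"
  proof (rule BG.iso_closed[OF E2' _ _ _ B.iso_id[OF o(1)] isou B.iso_id[OF o(2)]])
    show "LM i' \<in> Mor B" "LM d'' \<in> Mor B" "Cod B (LM i') = Dom B (LM d'')" using P d'' by auto
    show "Id B (Dom B \<iota>) \<in> hom B (Dom B \<iota>) (Dom B (LM i'))" "u \<in> hom B (Cod B \<iota>) (Cod B (LM i'))"
      "Id B (Cod B \<delta>) \<in> hom B (Cod B \<delta>) (Cod B (LM d''))"
      using o u PB P f d'' dl mi unfolding hom_def by auto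
    show "Comp B (LM i') (Id B (Dom B \<iota>)) = Comp B u \<iota>" using u PB P f by simp
    show "Comp B (LM d'') u = Comp B (Id B (Cod B \<delta>)) \<delta>" using key dl by simp
  qed
  thus ?thesis using po E1 unfolding inflation_def memE' by auto
qed

lemma g9: assumes dfl: "deflation A E' d" and f: "f \<in> Mor A" "Cod A f = Cod A d"
  shows "\<exists>d' f'. is_pullback A d f d' f' \<and> deflation A E' d'"
proof -
  obtain i where e: "(i, d) \<in> E" "(LM i, LM d) \<in> G" using dfl unfolding deflation_def memE' by auto
  have mi: "i \<in> Mor A" "d \<in> Mor A" "Cod A i = Dom A d" using AE.conf_mor[OF e(1)] by auto
  have kki: "is_kernel A i d" using AE.conf(1)[OF e(1)] .
  obtain d' f' j0 where pb: "is_pullback A d f d' f'" and e0: "(j0, d') \<in> E" using AE.E2op[OF e(1) f] by blast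
  have P: "d' \<in> Mor A" "f' \<in> Mor A" "Cod A d' = Dom A f" "Cod A f' = Dom A d" "Dom A d' = Dom A f'"
    "Comp A d f' = Comp A f d'" using A.pbD[OF pb] by auto
  obtain i'' where i'': "i'' \<in> Mor A" "Cod A i'' = Dom A d'" "Dom A i'' = Dom A i" "Comp A f' i'' = i"
    "is_kernel A i'' d'" using A.pb_ker[OF pb kki] by blast
  have i''z: "Comp A d' i'' = Zero A (Dom A i'') (Cod A d')" using A.kerD[OF i''(5)] by auto
  have E1: "(i'', d') \<in> E" using AE.ker_replace[OF e0 i''(5)] .
  have LF: "LM f \<in> Mor B" "Cod B (LM f) = Cod B (LM d)" using f mi by auto
  obtain \<delta> g2 j2 where pbB: "is_pullback B (LM d) (LM f) \<delta> g2" and e2: "(j2, \<delta>) \<in> G"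
    using BG.E2op[OF e(2) LF] by blast
  have PB: "\<delta> \<in> Mor B" "g2 \<in> Mor B" "Cod B \<delta> = Dom B (LM f)" "Cod B g2 = Dom B (LM d)" "Dom B \<delta> = Dom B g2"
    using B.pbD[OF pbB] by auto
  have kB: "is_kernel B (LM i) (LM d)" using BG.conf(1)[OF e(2)] .
  obtain \<iota> where io: "\<iota> \<in> Mor B" "Cod B \<iota> = Dom B \<delta>" "Dom B \<iota> = Dom B (LM i)" "Comp B g2 \<iota> = LM i"
    "is_kernel B \<iota> \<delta>" using B.pb_ker[OF pbB kB] by blast
  have ioz: "Comp B \<delta> \<iota> = Zero B (Dom B \<iota>) (Cod B \<delta>)" using B.kerD[OF io(5)] by auto
  have E2': "(\<iota>, \<delta>) \<in> G" using BG.ker_replace[OF e2 io(5)] .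
  have comm: "Comp B (LM f) (LM d') = Comp B (LM d) (LM f')"
    using F_comp[of d' f] F_comp[of f' d] P f mi by simp
  obtain u where u: "u \<in> Mor B" "Dom B u = Dom B (LM d')" "Cod B u = Dom B \<delta>" "Comp B \<delta> u = LM d'"
      "Comp B g2 u = LM f'"
    using B.pb_ex[OF pbB, of "LM d'" "LM f'"] P f mi comm by auto
  have key: "Comp B u (LM i'') = \<iota>"
  proof (rule B.pb_uniq[OF pbB])
    show "Comp B u (LM i'') \<in> Mor B" "\<iota> \<in> Mor B" "Cod B (Comp B u (LM i'')) = Dom B \<delta>" "Cod B \<iota> = Dom B \<delta>"
      "Dom B (Comp B u (LM i'')) = Dom B \<iota>" using u i'' io P mi by auto
    have "Comp B \<delta> (Comp B u (LM i'')) = Comp B (Comp B \<delta> u) (LM i'')"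
      using B.assocM[of "LM i''" u \<delta>] u i'' PB P by simp
    also have "\<dots> = LM (Comp A d' i'')" using u F_comp[of i'' d'] P i'' by simp
    also have "\<dots> = Comp B \<delta> \<iota>" using i''z ioz PB P i'' f mi io by simp
    finally show "Comp B \<delta> (Comp B u (LM i'')) = Comp B \<delta> \<iota>" .
    have "Comp B g2 (Comp B u (LM i'')) = Comp B (Comp B g2 u) (LM i'')"
      using B.assocM[of "LM i''" u g2] u i'' PB P by simp
    also have "\<dots> = LM (Comp A f' i'')" using u F_comp[of i'' f'] P i'' by simp
    finally show "Comp B g2 (Comp B u (LM i'')) = Comp B g2 \<iota>" using i'' io by simp
  qed
  obtain v where v: "v \<in> Mor B" "Dom B v = Cod B \<iota>" "Cod B v = Cod B (LM i'')"
      "Comp B v u = Id B (Cod B (LM i''))" "Comp B u v = Id B (Cod B \<iota>)"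
    using BF.five[OF LE[OF E1] _ u(1), of \<iota> \<delta>] u key E2' sub i'' P io by auto
  have isov: "iso B v" using B.iso_intro[OF v(1) u(1)] u v i'' P io by simp
  have o: "Dom B \<iota> \<in> Obj B" "Cod B \<delta> \<in> Obj B" using PB io f mi by auto
  have "(LM i'', LM d') \<in> G"
  proof (rule BG.iso_closed[OF E2' _ _ _ B.iso_id[OF o(1)] isov B.iso_id[OF o(2)]])
    show "LM i'' \<in> Mor B" "LM d' \<in> Mor B" "Cod B (LM i'') = Dom B (LM d')" using P i'' by auto
    show "Id B (Dom B \<iota>) \<in> hom B (Dom B \<iota>) (Dom B (LM i''))" "v \<in> hom B (Cod B \<iota>) (Cod B (LM i''))"
      "Id B (Cod B \<delta>) \<in> hom B (Cod B \<delta>) (Cod B (LM d'))"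
      using o v PB P f i'' io mi unfolding hom_def by auto
    have "Comp B v \<iota> = Comp B (Comp B v u) (LM i'')" using key B.assocM[of "LM i''" u v] u v i'' P io by simp
    thus "Comp B (LM i'') (Id B (Dom B \<iota>)) = Comp B v \<iota>" using v i'' io P mi by simp
    have "Comp B (LM d') v = Comp B \<delta> (Comp B u v)" using u B.assocM[of v u \<delta>] u v PB i'' P io by simp
    thus "Comp B (LM d') v = Comp B (Id B (Cod B \<delta>)) \<delta>" using v PB io i'' P by simp
  qed
  thus ?thesis using pb E1 unfolding deflation_def memE' by auto
qed

end


theorem mainTheorem1:
  fixes A :: "('o, 'm) addcat" and E :: "('m \<times> 'm) set"
    and B :: "('p, 'n) addcat" and F F' :: "('n \<times> 'n) set"
    and LO :: "'o \<Rightarrow> 'p" and LM :: "'m \<Rightarrow> 'n"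
  assumes "exact_category A E"
    and "exact_category B F"
    and "exact_functor A E B F LO LM"
    and "F' \<subseteq> F"
    and "exact_category B F'"
  shows "exact_category A {(i, d) \<in> E. (LM i, LM d) \<in> F'}"
proof -
  have pA: "preadditive A" using assms(1) unfolding exact_category_def additive_def by blast
  have pB: "preadditive B" using assms(2) unfolding exact_category_def additive_def by blast
  have af: "additive_functor A B LO LM" and exE: "\<forall>(i, d)\<in>E. (LM i, LM d) \<in> F"
    using assms(3) unfolding exact_functor_def by auto
  interpret S: setting A E B F F' LO LM
    by (unfold_locales) (use pA pB af assms exE in blast)+
  have eq: "{(i, d) \<in> E. (LM i, LM d) \<in> F'} = S.E'" by (simp add: S.E'_def)
  have iso: "\<forall>(i, d)\<in>S.E'. \<forall>i' d' f g h.
        i' \<in> Mor A \<and> d' \<in> Mor A \<and> Cod A i' = Dom A d' \<and>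
        iso A f \<and> iso A g \<and> iso A h \<and>
        f \<in> hom A (Dom A i) (Dom A i') \<and> g \<in> hom A (Cod A i) (Cod A i') \<and>
        h \<in> hom A (Cod A d) (Cod A d') \<and>
        Comp A i' f = Comp A g i \<and> Comp A d' g = Comp A h d \<longrightarrow> (i', d') \<in> S.E'"
    by (clarify, rule S.iso3; assumption)
  show ?thesis unfolding eq exact_category_def
    using S.g1 S.g2 iso S.g4 S.g5 S.g6 S.g7 S.g8 S.g9 by blast
qed

end
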